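(* Let $G$ be a connected finite graph that is not a Gallai tree and let $\mathcal{L}$ be a degree-list assignment for $G$. Suppose that $g$ is a partial proper $\mathcal{L}$-coloring of $G$. Then $G$ has a proper $\mathcal{L}$-coloring $f$ such that $|f^{-1}(\alpha)|\geq |g^{-1}(\alpha)|$ for every $\alpha\in\bigcup_{x\in V(G)}\mathcal{L}(x)$.
   Context: A list assignment for $G$ assigns to each vertex $x$ a set $\mathcal{L}(x)$; it is a degree-list assignment if $|\mathcal{L}(x)|\geq\deg_G(x)$ for all $x$. A partial $\mathcal{L}$-coloring is a function $g$ with $\mathrm{dom}(g)\subseteq V(G)$ and $g(x)\in\mathcal{L}(x)$ for all $x\in\mathrm{dom}(g)$; an $\mathcal{L}$-coloring has domain $V(G)$; it is proper if adjacent vertices in its domain receive different colors. A cut-vertex of a connected graph $G$ is a vertex $x$ such that $G-x$ is disconnected; a block is a maximal subgraph without a cut-vertex. A connected graph is a Gallai tree if every block is a clique or an odd cycle. *)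

theory Defs
  imports Main
begin

definition graph :: "'a set \<Rightarrow> 'a set set \<Rightarrow> bool" where
  "graph V E \<longleftrightarrow> finite V \<and> (\<forall>e\<in>E. card e = 2 \<and> e \<subseteq> V)"

definition degree :: "'a set \<Rightarrow> 'a set set \<Rightarrow> 'a \<Rightarrow> nat" where
  "degree V E x = card {y \<in> V. {x, y} \<in> E}"

definition connected_graph :: "'a set \<Rightarrow> 'a set set \<Rightarrow> bool" where
  "connected_graph V E \<longleftrightarrow> V \<noteq> {} \<and>
     (\<forall>x\<in>V. \<forall>y\<in>V. (x, y) \<in> {(u, v). u \<in> V \<and> v \<in> V \<and> {u, v} \<in> E}\<^sup>*)"

definition del_vertex_edges :: "'a set set \<Rightarrow> 'a \<Rightarrow> 'a set set" where
  "del_vertex_edges E x = {e \<in> E. x \<notin> e}"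

text \<open>A cut-vertex of a connected graph: removing it disconnects the graph
  (the empty graph is not regarded as disconnected).\<close>
definition cut_vertex :: "'a set \<Rightarrow> 'a set set \<Rightarrow> 'a \<Rightarrow> bool" where
  "cut_vertex V E x \<longleftrightarrow> x \<in> V \<and> V - {x} \<noteq> {} \<and>
     \<not> connected_graph (V - {x}) (del_vertex_edges E x)"

definition subgraph :: "'a set \<Rightarrow> 'a set set \<Rightarrow> 'a set \<Rightarrow> 'a set set \<Rightarrow> bool" where
  "subgraph W F V E \<longleftrightarrow> W \<subseteq> V \<and> F \<subseteq> E \<and> (\<forall>e\<in>F. e \<subseteq> W)"

definition nonseparable :: "'a set \<Rightarrow> 'a set set \<Rightarrow> bool" where
  "nonseparable W F \<longleftrightarrow> connected_graph W F \<and> (\<forall>x. \<not> cut_vertex W F x)"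

definition block :: "'a set \<Rightarrow> 'a set set \<Rightarrow> 'a set \<Rightarrow> 'a set set \<Rightarrow> bool" where
  "block V E W F \<longleftrightarrow> subgraph W F V E \<and> nonseparable W F \<and>
     (\<forall>W' F'. subgraph W' F' V E \<and> nonseparable W' F' \<and> W \<subseteq> W' \<and> F \<subseteq> F'
        \<longrightarrow> W' = W \<and> F' = F)"

definition is_clique :: "'a set \<Rightarrow> 'a set set \<Rightarrow> bool" where
  "is_clique W F \<longleftrightarrow> (\<forall>x\<in>W. \<forall>y\<in>W. x \<noteq> y \<longrightarrow> {x, y} \<in> F)"

definition is_odd_cycle :: "'a set \<Rightarrow> 'a set set \<Rightarrow> bool" where
  "is_odd_cycle W F \<longleftrightarrow> connected_graph W F \<and> card W \<ge> 3 \<and> odd (card W) \<and>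
     (\<forall>x\<in>W. degree W F x = 2)"

definition gallai_tree :: "'a set \<Rightarrow> 'a set set \<Rightarrow> bool" where
  "gallai_tree V E \<longleftrightarrow> connected_graph V E \<and>
     (\<forall>W F. block V E W F \<longrightarrow> is_clique W F \<or> is_odd_cycle W F)"

definition degree_list_assignment :: "'a set \<Rightarrow> 'a set set \<Rightarrow> ('a \<Rightarrow> 'c set) \<Rightarrow> bool" where
  "degree_list_assignment V E L \<longleftrightarrow>
     (\<forall>x\<in>V. infinite (L x) \<or> degree V E x \<le> card (L x))"

definition proper_partial_L_coloring ::
  "'a set \<Rightarrow> 'a set set \<Rightarrow> ('a \<Rightarrow> 'c set) \<Rightarrow> ('a \<Rightarrow> 'c option) \<Rightarrow> bool" where
  "proper_partial_L_coloring V E L g \<longleftrightarrow> dom g \<subseteq> V \<and>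
     (\<forall>x c. g x = Some c \<longrightarrow> c \<in> L x) \<and>
     (\<forall>x y. {x, y} \<in> E \<and> x \<in> dom g \<and> y \<in> dom g \<longrightarrow> g x \<noteq> g y)"

definition proper_L_coloring ::
  "'a set \<Rightarrow> 'a set set \<Rightarrow> ('a \<Rightarrow> 'c set) \<Rightarrow> ('a \<Rightarrow> 'c) \<Rightarrow> bool" where
  "proper_L_coloring V E L f \<longleftrightarrow> (\<forall>x\<in>V. f x \<in> L x) \<and>
     (\<forall>x y. {x, y} \<in> E \<and> x \<in> V \<and> y \<in> V \<longrightarrow> f x \<noteq> f y)"

end

theory Submission
  imports Defs
begin


definition adjR :: "'a set set \<Rightarrow> 'a set \<Rightarrow> ('a \<times> 'a) set" where
  "adjR E X = {(u,v). u \<in> X \<and> v \<in> X \<and> {u,v} \<in> E}"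

lemma conn_iff: "connected_graph X E \<longleftrightarrow> X \<noteq> {} \<and> (\<forall>x\<in>X. \<forall>y\<in>X. (x,y) \<in> (adjR E X)\<^sup>*)"
  unfolding connected_graph_def adjR_def by (rule refl)

lemma ins2: "{u,v} = {v,u}" by blast

lemma adjR_conv: "(adjR E X)\<inverse> = adjR E X"
  unfolding adjR_def by (auto simp: ins2)

lemma rtr_sym: "(u,v) \<in> (adjR E X)\<^sup>* \<Longrightarrow> (v,u) \<in> (adjR E X)\<^sup>*"
proof -
  assume "(u,v) \<in> (adjR E X)\<^sup>*"
  then have "(v,u) \<in> ((adjR E X)\<inverse>)\<^sup>*" by (rule rtrancl_converseI)
  then show ?thesis by (simp only: adjR_conv)
qed

lemma adjR_mono: "X \<subseteq> Y \<Longrightarrow> adjR E X \<subseteq> adjR E Y"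
  by (auto simp: adjR_def)

lemma rtr_mono: "X \<subseteq> Y \<Longrightarrow> p \<in> (adjR E X)\<^sup>* \<Longrightarrow> p \<in> (adjR E Y)\<^sup>*"
proof -
  assume a: "X \<subseteq> Y" "p \<in> (adjR E X)\<^sup>*"
  have "(adjR E X)\<^sup>* \<subseteq> (adjR E Y)\<^sup>*" using adjR_mono[OF a(1)] by (rule rtrancl_mono)
  then show ?thesis using a(2) by (rule subsetD)
qed

lemma conn_root:
  assumes "r \<in> X" "\<forall>y\<in>X. (r,y) \<in> (adjR E X)\<^sup>*"
  shows "connected_graph X E"
  unfolding conn_iff
proof (intro conjI ballI)
  show "X \<noteq> {}" using assms(1) by blast
  fix x y assume xy: "x \<in> X" "y \<in> X"
  have "(r,x) \<in> (adjR E X)\<^sup>*" using assms(2) xy(1) by blast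
  then have "(x,r) \<in> (adjR E X)\<^sup>*" by (rule rtr_sym)
  moreover have "(r,y) \<in> (adjR E X)\<^sup>*" using assms(2) xy(2) by blast
  ultimately show "(x,y) \<in> (adjR E X)\<^sup>*" by (rule rtrancl_trans)
qed

lemma conn_single: "connected_graph {x} E"
  unfolding conn_iff by simp

lemma conn_add:
  assumes "connected_graph R E" "r \<in> R" "{x,r} \<in> E"
  shows "connected_graph (insert x R) E"
proof (rule conn_root[of r])
  show "r \<in> insert x R" using assms by auto
  show "\<forall>y\<in>insert x R. (r, y) \<in> (adjR E (insert x R))\<^sup>*"
  proof
    fix y assume y: "y \<in> insert x R"
    show "(r, y) \<in> (adjR E (insert x R))\<^sup>*"
    proof (cases "y = x")
      case True
      have "(r,x) \<in> adjR E (insert x R)" using assms by (auto simp: adjR_def ins2)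
      then show ?thesis using True by auto
    next
      case False
      then have "y \<in> R" using y by auto
      then have "(r,y) \<in> (adjR E R)\<^sup>*" using assms unfolding conn_iff by auto
      then show ?thesis using rtr_mono[of R "insert x R"] by auto
    qed
  qed
qed

lemma conn_union:
  assumes "connected_graph A E" "connected_graph B E" "a \<in> A" "b \<in> B" "{a,b} \<in> E"
  shows "connected_graph (A \<union> B) E"
proof (rule conn_root[of a])
  show "a \<in> A \<union> B" using assms by auto
  show "\<forall>y\<in>A \<union> B. (a, y) \<in> (adjR E (A \<union> B))\<^sup>*"
  proof
    fix y assume y: "y \<in> A \<union> B"
    show "(a, y) \<in> (adjR E (A \<union> B))\<^sup>*"
    proof (cases "y \<in> A")
      case True
      then have "(a,y) \<in> (adjR E A)\<^sup>*" using assms unfolding conn_iff by auto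
      then show ?thesis using rtr_mono[of A "A \<union> B"] by auto
    next
      case False
      then have "y \<in> B" using y by auto
      then have "(b,y) \<in> (adjR E B)\<^sup>*" using assms unfolding conn_iff by auto
      then have 1: "(b,y) \<in> (adjR E (A \<union> B))\<^sup>*" using rtr_mono[of B "A \<union> B"] by auto
      have "(a,b) \<in> adjR E (A \<union> B)" using assms by (auto simp: adjR_def)
      then show ?thesis using 1 by (meson converse_rtrancl_into_rtrancl)
    qed
  qed
qed

lemma nbr_exists:
  assumes "connected_graph X E" "x \<in> X" "y \<in> X" "x \<noteq> y"
  shows "\<exists>z\<in>X. {x,z} \<in> E"
proof -
  have "(x,y) \<in> (adjR E X)\<^sup>*" using assms unfolding conn_iff by auto
  then obtain z where "(x,z) \<in> adjR E X" using assms(4) by (metis converse_rtranclE)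
  then show ?thesis by (auto simp: adjR_def)
qed

lemma exit_edge:
  assumes "(a,b) \<in> (adjR E X)\<^sup>*" "a \<in> R" "b \<notin> R"
  shows "\<exists>p q. p \<in> R \<and> q \<notin> R \<and> (p,q) \<in> adjR E X"
  using assms by (induction rule: rtrancl_induct) auto

lemma far_vertex:
  assumes "finite X" "connected_graph X E" "R \<subseteq> X" "connected_graph R E" "R \<noteq> X"
  shows "\<exists>z\<in>X-R. connected_graph (X - {z}) E"
  using assms
proof (induction "card (X - R)" arbitrary: R rule: less_induct)
  case less
  obtain r where r: "r \<in> R" using less.prems unfolding conn_iff by auto
  obtain y where y: "y \<in> X" "y \<notin> R" using less.prems by auto
  have "(r,y) \<in> (adjR E X)\<^sup>*" using less.prems r y unfolding conn_iff by auto
  then obtain p q where pq: "p \<in> R" "q \<notin> R" "(p,q) \<in> adjR E X"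
    using exit_edge r y by metis
  have q: "q \<in> X" "{q,p} \<in> E" using pq by (auto simp: adjR_def ins2)
  have c: "connected_graph (insert q R) E" using conn_add[OF less.prems(4) pq(1) q(2)] .
  show ?case
  proof (cases "insert q R = X")
    case True
    then have "X - {q} = R" using pq by auto
    then have "connected_graph (X - {q}) E" using less.prems(4) by simp
    moreover have "q \<in> X - R" using q pq by auto
    ultimately show ?thesis by blast
  next
    case False
    have "card (X - insert q R) < card (X - R)"
      using less.prems q pq by (intro psubset_card_mono) auto
    have "insert q R \<subseteq> X" using less.prems q by auto
    then obtain z where "z \<in> X - insert q R" "connected_graph (X - {z}) E"
      using less.hyps[of "insert q R", OF _ less.prems(1,2) _ c False] \<open>card (X - insert q R) < card (X - R)\<close>
      by blast
    then show ?thesis by auto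
  qed
qed



definition dg :: "'a set set \<Rightarrow> 'a set \<Rightarrow> 'a \<Rightarrow> nat" where
  "dg E X x = card {y\<in>X. {x,y} \<in> E}"

definition dla :: "'a set set \<Rightarrow> 'a set \<Rightarrow> ('a \<Rightarrow> 'c set) \<Rightarrow> bool" where
  "dla E X L \<longleftrightarrow> (\<forall>x\<in>X. infinite (L x) \<or> dg E X x \<le> card (L x))"

definition ppc :: "'a set set \<Rightarrow> 'a set \<Rightarrow> ('a \<Rightarrow> 'c set) \<Rightarrow> ('a \<Rightarrow> 'c option) \<Rightarrow> bool" where
  "ppc E X L g \<longleftrightarrow> dom g \<subseteq> X \<and> (\<forall>x c. g x = Some c \<longrightarrow> c \<in> L x) \<and>
     (\<forall>x y. {x,y} \<in> E \<and> x \<in> dom g \<and> y \<in> dom g \<longrightarrow> g x \<noteq> g y)"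

definition good :: "'a set set \<Rightarrow> 'a set \<Rightarrow> ('a \<Rightarrow> 'c set) \<Rightarrow> ('a \<Rightarrow> 'c option) \<Rightarrow> ('a \<Rightarrow> 'c) \<Rightarrow> bool" where
  "good E X L g f \<longleftrightarrow> (\<forall>x\<in>X. f x \<in> L x) \<and> (\<forall>x\<in>X. \<forall>y\<in>X. {x,y} \<in> E \<longrightarrow> f x \<noteq> f y) \<and>
     (\<forall>\<alpha>. card {x. g x = Some \<alpha>} \<le> card {x\<in>X. f x = \<alpha>})"

definition Lm :: "'a set set \<Rightarrow> 'a \<Rightarrow> 'c \<Rightarrow> ('a \<Rightarrow> 'c set) \<Rightarrow> 'a \<Rightarrow> 'c set" where
  "Lm E v c L = (\<lambda>x. if {v,x} \<in> E then L x - {c} else L x)"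

definition gm :: "'a set set \<Rightarrow> 'a \<Rightarrow> 'c \<Rightarrow> ('a \<Rightarrow> 'c option) \<Rightarrow> 'a \<Rightarrow> 'c option" where
  "gm E v c g = (\<lambda>x. if x = v then None else if {v,x} \<in> E \<and> g x = Some c then None else g x)"

lemma dg_del:
  assumes "finite X" "x \<noteq> v"
  shows "dg E (X - {v}) x = (if {x,v} \<in> E \<and> v \<in> X then dg E X x - 1 else dg E X x)"
proof -
  have "{y\<in>X - {v}. {x,y} \<in> E} = {y\<in>X. {x,y} \<in> E} - {v}" by blast
  then show ?thesis unfolding dg_def using assms by (auto simp: card_Diff_singleton_if)
qed

lemma dg_le_card: "finite X \<Longrightarrow> dg E X x \<le> card X"
  unfolding dg_def by (rule card_mono) auto

lemma good_count_fin:
  assumes "ppc E X L g" "finite X"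
  shows "finite {x. g x = Some a}"
proof -
  have "{x. g x = Some a} \<subseteq> X" using assms unfolding ppc_def dom_def by blast
  then show ?thesis using assms(2) finite_subset by blast
qed

lemma move:
  assumes fin: "finite X" and v: "v \<in> X" and nl: "\<forall>x. {x,x} \<notin> E"
    and pp: "ppc E X L g" and dl: "dla E X L"
    and ch: "g v = Some c \<or> (g v = None \<and> c \<in> L v \<and> card {y. {v,y} \<in> E \<and> g y = Some c} \<le> 1)"
  shows move_dla: "dla E (X - {v}) (Lm E v c L)"
    and move_ppc: "ppc E (X-{v}) (Lm E v c L) (gm E v c g)"
    and move_good: "good E (X - {v}) (Lm E v c L) (gm E v c g) f \<Longrightarrow> good E X L g (f(v := c))"
proof -
  show "dla E (X - {v}) (Lm E v c L)"
    unfolding dla_def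
  proof
    fix x assume x: "x \<in> X - {v}"
    have d: "dg E (X - {v}) x = (if {x,v} \<in> E then dg E X x - 1 else dg E X x)"
      using dg_del[OF fin, of x v E] x v by auto
    have o: "infinite (L x) \<or> dg E X x \<le> card (L x)" using dl x unfolding dla_def by auto
    show "infinite (Lm E v c L x) \<or> dg E (X - {v}) x \<le> card (Lm E v c L x)"
    proof (cases "{v,x} \<in> E")
      case True
      then have e: "{x,v} \<in> E" by (simp add: ins2)
      have l: "Lm E v c L x = L x - {c}" using True unfolding Lm_def by simp
      show ?thesis
      proof (cases "infinite (L x)")
        case True
        then show ?thesis using l by simp
      next
        case False
        then have "card (L x - {c}) \<ge> card (L x) - 1" by (simp add: card_Diff_singleton_if)
        then show ?thesis using l d e o False by simp
      qed
    next
      case False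
      then have e: "{x,v} \<notin> E" by (simp add: ins2)
      have l: "Lm E v c L x = L x" using False unfolding Lm_def by simp
      show ?thesis using l d e o by simp
    qed
  qed
  have domg: "dom g \<subseteq> X" using pp unfolding ppc_def by auto
  have gl: "\<And>x c. g x = Some c \<Longrightarrow> c \<in> L x" using pp unfolding ppc_def by auto
  have gp: "\<And>x y. {x,y} \<in> E \<Longrightarrow> x \<in> dom g \<Longrightarrow> y \<in> dom g \<Longrightarrow> g x \<noteq> g y"
    using pp unfolding ppc_def by auto
  have gm_sub: "\<And>x a. gm E v c g x = Some a \<Longrightarrow> g x = Some a"
    unfolding gm_def by (auto split: if_splits)
  show "ppc E (X-{v}) (Lm E v c L) (gm E v c g)"
    unfolding ppc_def
  proof (intro conjI allI impI)
    show "dom (gm E v c g) \<subseteq> X - {v}"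
      using domg unfolding gm_def dom_def by auto
  next
    fix x a assume a: "gm E v c g x = Some a"
    then have "g x = Some a" "x \<noteq> v" "\<not> ({v,x} \<in> E \<and> g x = Some c)"
      unfolding gm_def by (auto split: if_splits)
    then show "a \<in> Lm E v c L x" using gl unfolding Lm_def by auto
  next
    fix x y assume a: "{x, y} \<in> E \<and> x \<in> dom (gm E v c g) \<and> y \<in> dom (gm E v c g)"
    then obtain a b where "gm E v c g x = Some a" "gm E v c g y = Some b" by auto
    then have "g x = Some a" "g y = Some b" "gm E v c g x = g x" "gm E v c g y = g y"
      using gm_sub by auto
    then show "gm E v c g x \<noteq> gm E v c g y" using gp a by (metis domI)
  qed
  assume gf: "good E (X - {v}) (Lm E v c L) (gm E v c g) f"
  have cv: "c \<in> L v" using ch gl by auto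
  have fl: "\<forall>x\<in>X - {v}. f x \<in> Lm E v c L x" using gf unfolding good_def by auto
  have fp: "\<forall>x\<in>X - {v}. \<forall>y\<in>X - {v}. {x,y} \<in> E \<longrightarrow> f x \<noteq> f y" using gf unfolding good_def by auto
  have fc: "\<And>a. card {x. gm E v c g x = Some a} \<le> card {x\<in>X - {v}. f x = a}"
    using gf unfolding good_def by auto
  have nbc: "\<And>y. y \<in> X - {v} \<Longrightarrow> {v,y} \<in> E \<Longrightarrow> f y \<noteq> c"
  proof -
    fix y assume y: "y \<in> X - {v}" "{v,y} \<in> E"
    have "f y \<in> Lm E v c L y" using fl y(1) by blast
    then show "f y \<noteq> c" using y(2) unfolding Lm_def by simp
  qed
  show "good E X L g (f(v := c))"
    unfolding good_def
  proof (intro conjI ballI impI allI)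
    fix x assume "x \<in> X"
    then show "(f(v := c)) x \<in> L x" using fl cv unfolding Lm_def by (auto split: if_splits)
  next
    fix x y assume xy: "x \<in> X" "y \<in> X" "{x,y} \<in> E"
    have "x \<noteq> y" using xy nl by auto
    show "(f(v := c)) x \<noteq> (f(v := c)) y"
    proof (cases "x = v")
      case True
      then show ?thesis using nbc[of y] xy \<open>x \<noteq> y\<close> by auto
    next
      case False
      note xv = False
      show ?thesis
      proof (cases "y = v")
        case True
        then have "{v,x} \<in> E" using xy by (simp add: ins2)
        then show ?thesis using nbc[of x] xy xv True by auto
      next
        case False
        then show ?thesis using fp xy xv by auto
      qed
    qed
  next
    fix a
    let ?G = "{x. g x = Some a}"
    let ?G' = "{x. gm E v c g x = Some a}"
    let ?D = "{x. g x = Some a \<and> gm E v c g x = None}"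
    have finG: "finite ?G" using good_count_fin[OF pp fin] .
    have sub: "?G \<subseteq> ?G' \<union> ?D" unfolding gm_def by auto
    have finD: "finite ?D" using finG by (rule finite_subset[rotated]) auto
    have "?G' \<subseteq> ?G" using gm_sub by blast
    then have finG': "finite ?G'" using finG by (rule finite_subset)
    have cD: "card ?D \<le> (if a = c then 1 else 0)"
    proof (cases "a = c")
      case False
      have De: "?D = {}"
      proof (rule ccontr)
        assume "?D \<noteq> {}"
        then obtain x where x: "g x = Some a" "gm E v c g x = None" by auto
        show False
        proof (cases "x = v")
          case True then show False using x ch False by auto
        next
          case False then show False using x \<open>a \<noteq> c\<close> unfolding gm_def by (auto split: if_splits)
        qed
      qed
      have "card ?D = 0" by (metis De card.empty)
      then show ?thesis using False by simp
    next
      case True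
      show ?thesis
      proof (cases "g v = Some c")
        case True
        have "?D \<subseteq> {v}"
        proof
          fix x assume x: "x \<in> ?D"
          show "x \<in> {v}"
          proof (rule ccontr)
            assume "x \<notin> {v}"
            then have "{v,x} \<in> E" "g x = Some c" using x unfolding gm_def by (auto split: if_splits)
            then show False using gp[of v x] True by (auto simp: dom_def)
          qed
        qed
        then have "card ?D \<le> 1" using card_mono[of "{v}" ?D] by simp
        then show ?thesis using \<open>a = c\<close> by simp
      next
        case False
        then have gv: "g v = None" "card {y. {v,y} \<in> E \<and> g y = Some c} \<le> 1" using ch by auto
        have s1: "?D \<subseteq> {y. {v,y} \<in> E \<and> g y = Some c}"
          using gv \<open>a = c\<close> unfolding gm_def by (auto split: if_splits)
        have "{y. {v,y} \<in> E \<and> g y = Some c} \<subseteq> {x. g x = Some c}" by blast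
        then have f1: "finite {y. {v,y} \<in> E \<and> g y = Some c}"
          using good_count_fin[OF pp fin, of c] by (rule finite_subset)
        have "card ?D \<le> card {y. {v,y} \<in> E \<and> g y = Some c}" using card_mono[OF f1 s1] .
        then have "card ?D \<le> 1" using gv(2) by linarith
        then show ?thesis using \<open>a = c\<close> by simp
      qed
    qed
    have "card ?G \<le> card (?G' \<union> ?D)" using sub finG' finD by (intro card_mono) auto
    also have "\<dots> \<le> card ?G' + card ?D" by (rule card_Un_le)
    also have "\<dots> \<le> card {x\<in>X - {v}. f x = a} + (if a = c then 1 else 0)" using fc[of a] cD by simp
    also have "\<dots> = card {x\<in>X. (f(v := c)) x = a}"
    proof (cases "a = c")
      case True
      have "{x\<in>X. (f(v := c)) x = a} = insert v {x\<in>X - {v}. f x = a}" using True v by auto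
      then show ?thesis using True fin by simp
    next
      case False
      have "{x\<in>X. (f(v := c)) x = a} = {x\<in>X - {v}. f x = a}" using False by auto
      then show ?thesis using False by simp
    qed
    finally show "card ?G \<le> card {x\<in>X. (f(v := c)) x = a}" .
  qed
qed



lemma legal:
  assumes fin: "finite X" and v: "v \<in> X" and pp: "ppc E X L g" and dl: "dla E X L"
    and d1: "dg E X v \<ge> 1"
  shows "\<exists>c. g v = Some c \<or> (g v = None \<and> c \<in> L v \<and> card {y. {v,y} \<in> E \<and> g y = Some c} \<le> 1)"
proof (cases "g v")
  case (Some c)
  then show ?thesis by auto
next
  case None
  let ?N = "{y\<in>X. {v,y} \<in> E}"
  let ?S = "\<lambda>c. {y. {v,y} \<in> E \<and> g y = Some c}"
  have domg: "dom g \<subseteq> X" using pp unfolding ppc_def by auto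
  have SN: "\<And>c. ?S c \<subseteq> ?N" using domg by auto
  have finN: "finite ?N" using fin by simp
  have finS: "\<And>c. finite (?S c)" by (rule finite_subset[OF SN finN])
  show ?thesis
  proof (cases "finite (L v)")
    case False
    let ?U = "(\<lambda>y. the (g y)) ` ?N"
    have "finite ?U" using finN by simp
    then have "infinite (L v - ?U)" using False by simp
    then have "L v - ?U \<noteq> {}" by (rule infinite_imp_nonempty)
    then obtain c where "c \<in> L v - ?U" by blast
    then have c: "c \<in> L v" "c \<notin> ?U" by auto
    have Se: "?S c = {}"
    proof (rule ccontr)
      assume "?S c \<noteq> {}"
      then obtain y where y: "{v,y} \<in> E" "g y = Some c" by auto
      then have "y \<in> ?N" using domg by auto
      then have "c \<in> ?U" using y by force
      then show False using c by simp
    qed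
    have "card (?S c) = 0" by (metis Se card.empty)
    then have "g v = None \<and> c \<in> L v \<and> card (?S c) \<le> 1" using None c by simp
    then show ?thesis by blast
  next
    case True
    have cl: "dg E X v \<le> card (L v)" using dl v True unfolding dla_def by auto
    show ?thesis
    proof (rule ccontr)
      assume "\<not> ?thesis"
      then have two: "\<forall>c\<in>L v. 2 \<le> card (?S c)" using None by force
      have disj: "\<forall>i\<in>L v. \<forall>j\<in>L v. i \<noteq> j \<longrightarrow> ?S i \<inter> ?S j = {}" by auto
      have "card (\<Union> (?S ` L v)) = (\<Sum>c\<in>L v. card (?S c))"
        using card_UN_disjoint[OF True _ disj] finS by blast
      also have "\<dots> \<ge> (\<Sum>c\<in>L v. 2)" using two by (intro sum_mono) auto
      finally have "card (\<Union> (?S ` L v)) \<ge> 2 * card (L v)" by simp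
      moreover have "card (\<Union> (?S ` L v)) \<le> card ?N" using SN finN by (intro card_mono) auto
      moreover have "card ?N = dg E X v" unfolding dg_def by simp
      ultimately show False using cl d1 by linarith
    qed
  qed
qed

lemma nbr_dg:
  assumes "finite X" "connected_graph X E" "x \<in> X" "y \<in> X" "x \<noteq> y"
  shows "dg E X x \<ge> 1"
proof -
  obtain z where "z \<in> X" "{x,z} \<in> E" using nbr_exists[OF assms(2-5)] by blast
  then have "{y\<in>X. {x,y} \<in> E} \<noteq> {}" by auto
  then show ?thesis unfolding dg_def using assms(1) by (simp add: Suc_leI card_gt_0_iff)
qed

lemma slack:
  assumes "finite X" "\<forall>x. {x,x} \<notin> E" "connected_graph X E" "r \<in> X"
    "infinite (L r) \<or> dg E X r < card (L r)" "dla E X L" "ppc E X L g"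
  shows "\<exists>f. good E X L g f"
  using assms
proof (induction "card X" arbitrary: X L g rule: less_induct)
  case less
  note fin = less.prems(1) and nl = less.prems(2) and cn = less.prems(3) and r = less.prems(4)
    and sl = less.prems(5) and dl = less.prems(6) and pp = less.prems(7)
  have domg: "dom g \<subseteq> X" using pp unfolding ppc_def by auto
  have gl: "\<And>x c. g x = Some c \<Longrightarrow> c \<in> L x" using pp unfolding ppc_def by auto
  show ?case
  proof (cases "X = {r}")
    case True
    have "L r \<noteq> {}" using sl by auto
    then obtain c0 where c0: "c0 \<in> L r" by auto
    define f where "f = (\<lambda>x::'a. case g r of Some c \<Rightarrow> c | None \<Rightarrow> c0)"
    have "good E X L g f"
      unfolding good_def
    proof (intro conjI ballI allI impI)
      fix x assume "x \<in> X"
      then show "f x \<in> L x" using True c0 gl unfolding f_def by (auto split: option.splits)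
    next
      fix x y assume "x \<in> X" "y \<in> X" "{x,y} \<in> E"
      then show "f x \<noteq> f y" using True nl by auto
    next
      fix a
      have sub: "{x. g x = Some a} \<subseteq> {r}" using domg True by (auto simp: dom_def)
      show "card {x. g x = Some a} \<le> card {x \<in> X. f x = a}"
      proof (cases "g r = Some a")
        case True
        then have "{x \<in> X. f x = a} = {r}" using \<open>X = {r}\<close> unfolding f_def by auto
        then show ?thesis using sub card_mono[of "{r}"] by simp
      next
        case False
        then have "{x. g x = Some a} = {}" using sub by auto
        then show ?thesis by (metis card.empty le0)
      qed
    qed
    then show ?thesis by blast
  next
    case False
    have rc: "connected_graph {r} E" by (rule conn_single)
    obtain z where z: "z \<in> X - {r}" "connected_graph (X - {z}) E"
      using far_vertex[OF fin cn _ rc] r False by blast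
    have d1: "dg E X z \<ge> 1" using nbr_dg[OF fin cn, of z r] z r by auto
    obtain c where ch: "g z = Some c \<or> (g z = None \<and> c \<in> L z \<and> card {y. {z,y} \<in> E \<and> g y = Some c} \<le> 1)"
      using legal[OF fin _ pp dl d1] z by auto
    have zX: "z \<in> X" using z by auto
    note mv = move[OF fin zX nl pp dl ch]
    have rz: "r \<noteq> z" using z by auto
    have sl': "infinite (Lm E z c L r) \<or> dg E (X - {z}) r < card (Lm E z c L r)"
    proof (cases "{z,r} \<in> E")
      case True
      have e: "{r,z} \<in> E" using True by (simp add: ins2)
      have l: "Lm E z c L r = L r - {c}" using True unfolding Lm_def by simp
      have d: "dg E (X - {z}) r = dg E X r - 1" using dg_del[OF fin rz, of E] e zX by auto
      have "dg E X r \<ge> 1" using nbr_dg[OF fin cn r zX rz] .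
      show ?thesis
      proof (cases "finite (L r)")
        case True
        have "card (L r - {c}) \<ge> card (L r) - 1" by (simp add: card_Diff_singleton_if)
        moreover have "dg E X r < card (L r)" using sl True by simp
        ultimately have "dg E (X - {z}) r < card (L r - {c})" using d \<open>dg E X r \<ge> 1\<close> by linarith
        then show ?thesis using l by simp
      next
        case False
        then show ?thesis using l by simp
      qed
    next
      case False
      have e: "{r,z} \<notin> E" using False by (simp add: ins2)
      have l: "Lm E z c L r = L r" using False unfolding Lm_def by simp
      have d: "dg E (X - {z}) r = dg E X r" using dg_del[OF fin rz, of E] e by auto
      then show ?thesis using l sl by simp
    qed
    have "card (X - {z}) < card X" by (rule card_Diff1_less[OF fin zX])
    moreover have "finite (X - {z})" using fin by simp
    moreover have "r \<in> X - {z}" using r rz by simp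
    ultimately obtain f where "good E (X - {z}) (Lm E z c L) (gm E z c g) f"
      using less.hyps[OF _ _ nl z(2) _ sl' mv(1) mv(2)] by presburger
    then have "good E X L g (f(z := c))" by (rule mv(3))
    then show ?thesis by blast
  qed
qed



definition ns :: "'a set set \<Rightarrow> 'a set \<Rightarrow> bool" where
  "ns E X \<longleftrightarrow> connected_graph X E \<and> (\<forall>x\<in>X. X - {x} \<noteq> {} \<longrightarrow> connected_graph (X - {x}) E)"

definition clq :: "'a set set \<Rightarrow> 'a set \<Rightarrow> bool" where
  "clq E X \<longleftrightarrow> (\<forall>x\<in>X. \<forall>y\<in>X. x \<noteq> y \<longrightarrow> {x,y} \<in> E)"

definition ocyc :: "'a set set \<Rightarrow> 'a set \<Rightarrow> bool" where
  "ocyc E X \<longleftrightarrow> connected_graph X E \<and> 3 \<le> card X \<and> odd (card X) \<and> (\<forall>x\<in>X. dg E X x = 2)"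

definition att :: "'a set set \<Rightarrow> 'a set \<Rightarrow> 'a set \<Rightarrow> 'a set" where
  "att E U P = {u\<in>U. \<exists>p\<in>P. {p,u} \<in> E}"

lemma comp_conn:
  assumes "y0 \<in> Y"
  shows "connected_graph {q\<in>Y. (y0,q) \<in> (adjR E Y)\<^sup>*} E"
proof -
  let ?C = "{q\<in>Y. (y0,q) \<in> (adjR E Y)\<^sup>*}"
  have "\<And>q. (y0,q) \<in> (adjR E Y)\<^sup>* \<Longrightarrow> (y0,q) \<in> (adjR E ?C)\<^sup>*"
  proof -
    fix q assume "(y0,q) \<in> (adjR E Y)\<^sup>*"
    then show "(y0,q) \<in> (adjR E ?C)\<^sup>*"
    proof (induction rule: rtrancl_induct)
      case base
      then show ?case by simp
    next
      case (step t t')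
      have "(y0,t') \<in> (adjR E Y)\<^sup>*" using step(1,2) by (rule rtrancl_into_rtrancl)
      then have "(t,t') \<in> adjR E ?C" using step(1,2) unfolding adjR_def by auto
      with step(3) show ?case by (rule rtrancl_into_rtrancl)
    qed
  qed
  then show ?thesis using assms by (intro conn_root[of y0]) auto
qed

lemma comp_removal:
  assumes cP: "connected_graph P E" and x: "x \<in> P" and Q: "Q \<subseteq> P - {x}"
    and cl: "\<forall>t\<in>P - {x} - Q. \<forall>t'\<in>Q. {t,t'} \<notin> E"
  shows "connected_graph (P - Q) E"
proof (rule conn_root[of x])
  show "x \<in> P - Q" using x Q by auto
  let ?A = "adjR E (P - Q)"
  show "\<forall>y\<in>P - Q. (x, y) \<in> ?A\<^sup>*"
  proof
    fix q' assume q': "q' \<in> P - Q"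
    have qx: "(q',x) \<in> (adjR E P)\<^sup>*" using cP q' x unfolding conn_iff by auto
    have "\<And>tt. (q',tt) \<in> (adjR E P)\<^sup>* \<Longrightarrow> (q',x) \<in> ?A\<^sup>* \<or> (tt \<in> P - Q \<and> (q',tt) \<in> ?A\<^sup>*)"
    proof -
    fix tt assume "(q',tt) \<in> (adjR E P)\<^sup>*"
    then show "(q',x) \<in> ?A\<^sup>* \<or> (tt \<in> P - Q \<and> (q',tt) \<in> ?A\<^sup>*)"
    proof (induction rule: rtrancl_induct)
      case base
      then show ?case using q' by simp
    next
      case (step t t')
      show ?case
      proof (cases "(q',x) \<in> ?A\<^sup>*")
        case True then show ?thesis by simp
      next
        case False
        then have t: "t \<in> P - Q" "(q',t) \<in> ?A\<^sup>*" using step(3) by auto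
        have tt': "t \<in> P" "t' \<in> P" "{t,t'} \<in> E" using step(2) unfolding adjR_def by auto
        show ?thesis
        proof (cases "t = x")
          case True then show ?thesis using t by simp
        next
          case False
          have "t' \<notin> Q" using cl t False tt' by auto
          then have "(t,t') \<in> ?A" using t tt' unfolding adjR_def by auto
          then have "(q',t') \<in> ?A\<^sup>*" using t(2) by (meson rtrancl_into_rtrancl)
          then show ?thesis using \<open>t' \<notin> Q\<close> tt' by simp
        qed
      qed
    qed
    qed
    from this[OF qx] have "(q',x) \<in> ?A\<^sup>*" by blast
    then show "(x,q') \<in> ?A\<^sup>*" by (rule rtr_sym)
  qed
qed

lemma two_elems:
  assumes "finite A" "2 \<le> card A"
  shows "\<exists>a\<in>A. a \<noteq> x"
proof (rule ccontr)
  assume "\<not> ?thesis"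
  then have "A \<subseteq> {x}" by auto
  then have "card A \<le> card {x}" by (intro card_mono) auto
  then show False using assms by simp
qed

lemma ear:
  assumes fP: "finite P" and fU: "finite U" and nsU: "ns E U" and cU: "2 \<le> card U"
    and disj: "U \<inter> P = {}" and cP: "connected_graph P E" and aP: "2 \<le> card (att E U P)"
    and minP: "\<forall>P'. P' \<subseteq> P \<and> connected_graph P' E \<and> 2 \<le> card (att E U P') \<longrightarrow> card P \<le> card P'"
  shows "ns E (U \<union> P)"
  unfolding ns_def
proof (intro conjI ballI impI)
  have cUc: "connected_graph U E" using nsU unfolding ns_def by auto
  have fa: "finite (att E U P)" using fU unfolding att_def by simp
  obtain u1 where u1: "u1 \<in> att E U P" using two_elems[OF fa aP] by blast
  then obtain p1 where p1: "p1 \<in> P" "{p1,u1} \<in> E" "u1 \<in> U" unfolding att_def by auto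
  have e1: "{u1,p1} \<in> E" using p1 by (simp add: ins2)
  show "connected_graph (U \<union> P) E" by (rule conn_union[OF cUc cP p1(3) p1(1) e1])
  fix x assume x: "x \<in> U \<union> P" and ne: "U \<union> P - {x} \<noteq> {}"
  show "connected_graph (U \<union> P - {x}) E"
  proof (cases "x \<in> U")
    case True
    obtain w where "w \<in> U" "w \<noteq> x" using two_elems[OF fU cU] by blast
    then have "U - {x} \<noteq> {}" by auto
    then have c1: "connected_graph (U - {x}) E" using nsU True unfolding ns_def by auto
    obtain u2 where u2: "u2 \<in> att E U P" "u2 \<noteq> x" using two_elems[OF fa aP] by blast
    then obtain p2 where p2: "p2 \<in> P" "{p2,u2} \<in> E" "u2 \<in> U" unfolding att_def by auto
    have e2: "{u2,p2} \<in> E" using p2 by (simp add: ins2)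
    have "connected_graph ((U - {x}) \<union> P) E"
      by (rule conn_union[OF c1 cP _ p2(1) e2]) (use u2 p2 in auto)
    moreover have "(U - {x}) \<union> P = U \<union> P - {x}" using True disj by auto
    ultimately show ?thesis by simp
  next
    case False
    then have xP: "x \<in> P" using x by auto
    obtain u0 where u0: "u0 \<in> U" using p1 by auto
    let ?Z = "U \<union> (P - {x})"
    have Zeq: "U \<union> P - {x} = ?Z" using False by auto
    have "connected_graph ?Z E"
    proof (rule conn_root[of u0])
      show "u0 \<in> ?Z" using u0 by auto
      show "\<forall>y\<in>?Z. (u0, y) \<in> (adjR E ?Z)\<^sup>*"
      proof
        fix y assume y: "y \<in> ?Z"
        show "(u0, y) \<in> (adjR E ?Z)\<^sup>*"
        proof (cases "y \<in> U")
          case True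
          then have "(u0,y) \<in> (adjR E U)\<^sup>*" using cUc u0 unfolding conn_iff by auto
          then show ?thesis by (rule rtr_mono[rotated]) auto
        next
          case False
          then have yP: "y \<in> P - {x}" using y by auto
          define Q where "Q = {q\<in>P - {x}. (y,q) \<in> (adjR E (P - {x}))\<^sup>*}"
          have yQ: "y \<in> Q" unfolding Q_def using yP by simp
          show ?thesis
          proof (cases "\<exists>q\<in>Q. \<exists>u\<in>U. {q,u} \<in> E")
            case True
            then obtain q u where qu: "q \<in> Q" "u \<in> U" "{q,u} \<in> E" by blast
            have "(y,q) \<in> (adjR E (P - {x}))\<^sup>*" using qu unfolding Q_def by auto
            then have a1: "(y,q) \<in> (adjR E ?Z)\<^sup>*" by (rule rtr_mono[rotated]) auto
            have "q \<in> ?Z" using qu unfolding Q_def by auto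
            then have a2: "(q,u) \<in> adjR E ?Z" using qu unfolding adjR_def by auto
            have "(u,u0) \<in> (adjR E U)\<^sup>*" using cUc u0 qu unfolding conn_iff by auto
            then have a3: "(u,u0) \<in> (adjR E ?Z)\<^sup>*" by (rule rtr_mono[rotated]) auto
            have "(y,u) \<in> (adjR E ?Z)\<^sup>*" using a1 a2 by (rule rtrancl_into_rtrancl)
            then have "(y,u0) \<in> (adjR E ?Z)\<^sup>*" using a3 by (rule rtrancl_trans)
            then show ?thesis by (rule rtr_sym)
          next
            case False
            have QP: "Q \<subseteq> P - {x}" unfolding Q_def by auto
            have cl: "\<forall>t\<in>P - {x} - Q. \<forall>t'\<in>Q. {t,t'} \<notin> E"
            proof (intro ballI notI)
              fix t t' assume t: "t \<in> P - {x} - Q" and t': "t' \<in> Q" and e: "{t,t'} \<in> E"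
              have "(y,t') \<in> (adjR E (P - {x}))\<^sup>*" using t' unfolding Q_def by auto
              moreover have "(t',t) \<in> adjR E (P - {x})" using t t' e QP unfolding adjR_def by (auto simp: ins2)
              ultimately have "(y,t) \<in> (adjR E (P - {x}))\<^sup>*" by (rule rtrancl_into_rtrancl)
              then have "t \<in> Q" using t unfolding Q_def by auto
              then show False using t by auto
            qed
            have c2: "connected_graph (P - Q) E" by (rule comp_removal[OF cP xP QP cl])
            have "att E U P \<subseteq> att E U (P - Q)"
            proof
              fix u assume "u \<in> att E U P"
              then obtain p where p: "p \<in> P" "{p,u} \<in> E" "u \<in> U" unfolding att_def by auto
              have "p \<notin> Q" using False p by blast
              then show "u \<in> att E U (P - Q)" using p unfolding att_def by auto
            qed
            moreover have "finite (att E U (P - Q))" using fU unfolding att_def by simp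
            ultimately have "card (att E U P) \<le> card (att E U (P - Q))" by (rule card_mono[rotated])
            then have "2 \<le> card (att E U (P - Q))" using aP by simp
            then have "card P \<le> card (P - Q)" using minP c2 by blast
            moreover have "card (P - Q) < card P" using fP yQ QP by (intro psubset_card_mono) auto
            ultimately show ?thesis by simp
          qed
        qed
      qed
    qed
    then show ?thesis using Zeq by simp
  qed
qed



lemma card_le1_single:
  assumes "finite A" "card A \<le> 1" "A \<subseteq> U" "U \<noteq> {}"
  shows "\<exists>u\<in>U. A \<subseteq> {u}"
proof (cases "A = {}")
  case True then show ?thesis using assms by auto
next
  case False
  then obtain a where a: "a \<in> A" by auto
  have "\<forall>x\<in>A. \<forall>y\<in>A. x = y" using assms(1,2) card_le_Suc0_iff_eq by auto
  then have "A \<subseteq> {a}" using a by auto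
  then show ?thesis using a assms(3) by auto
qed

lemma comp_attach:
  assumes fin: "finite X" and nsX: "ns E X" and UX: "U \<subseteq> X" and UneX: "U \<noteq> X" and cU: "2 \<le> card U"
  shows "\<exists>P. P \<subseteq> X - U \<and> connected_graph P E \<and> 2 \<le> card (att E U P)"
proof -
  obtain y0 where y0: "y0 \<in> X - U" using UX UneX by auto
  define C where "C = {q\<in>X - U. (y0,q) \<in> (adjR E (X - U))\<^sup>*}"
  have cC: "connected_graph C E" unfolding C_def by (rule comp_conn[OF y0])
  have CY: "C \<subseteq> X - U" unfolding C_def by auto
  have fU: "finite U" using fin UX finite_subset by auto
  have "2 \<le> card (att E U C)"
  proof (rule ccontr)
    assume "\<not> ?thesis"
    then have c1: "card (att E U C) \<le> 1" by simp
    have fa: "finite (att E U C)" using fU unfolding att_def by simp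
    have "U \<noteq> {}" using cU by auto
    then obtain u where u: "u \<in> U" "att E U C \<subseteq> {u}"
      using card_le1_single[OF fa c1] unfolding att_def by blast
    obtain u' where u': "u' \<in> U" "u' \<noteq> u" using two_elems[OF fU cU] by blast
    have "X - {u} \<noteq> {}" using y0 u by auto
    then have cX: "connected_graph (X - {u}) E" using nsX u UX unfolding ns_def by auto
    have "y0 \<in> X - {u}" "u' \<in> X - {u}" using y0 u u' UX by auto
    then have yu: "(y0,u') \<in> (adjR E (X - {u}))\<^sup>*" using cX unfolding conn_iff by auto
    have "y0 \<in> C" unfolding C_def using y0 by simp
    have "\<And>t. (y0,t) \<in> (adjR E (X - {u}))\<^sup>* \<Longrightarrow> t \<in> C"
    proof -
      fix t assume "(y0,t) \<in> (adjR E (X - {u}))\<^sup>*"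
      then show "t \<in> C"
      proof (induction rule: rtrancl_induct)
        case base then show ?case using \<open>y0 \<in> C\<close> .
      next
        case (step t t')
        have tt': "t' \<in> X - {u}" "{t,t'} \<in> E" using step(2) unfolding adjR_def by auto
        have tC: "t \<in> X - U" "(y0,t) \<in> (adjR E (X - U))\<^sup>*" using step(3) unfolding C_def by auto
        have "t' \<notin> U"
        proof
          assume "t' \<in> U"
          then have "t' \<in> att E U C" using step(3) tt' unfolding att_def by auto
          then show False using u tt' by auto
        qed
        then have "(t,t') \<in> adjR E (X - U)" using tC tt' unfolding adjR_def by auto
        with tC(2) have "(y0,t') \<in> (adjR E (X - U))\<^sup>*" by (rule rtrancl_into_rtrancl)
        then show ?case using \<open>t' \<notin> U\<close> tt' unfolding C_def by auto
      qed
    qed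
    from this[OF yu] have "u' \<in> C" .
    then show False using CY u' by auto
  qed
  then show ?thesis using cC CY by blast
qed

lemma ns_edge:
  assumes "{a,b} \<in> E"
  shows "ns E {a,b}"
  unfolding ns_def
proof (intro conjI ballI impI)
  show "connected_graph {a,b} E" using conn_add[OF conn_single[of b] _ assms] by simp
  fix x assume "x \<in> {a,b}" "{a,b} - {x} \<noteq> {}"
  then have "{a,b} - {x} = {a} \<or> {a,b} - {x} = {b}" by auto
  then show "connected_graph ({a,b} - {x}) E" using conn_single by metis
qed

lemma dg_split:
  assumes "finite X" "X = A \<union> B" "A \<inter> B = {}"
  shows "dg E X x = card {w\<in>A. {x,w} \<in> E} + card {w\<in>B. {x,w} \<in> E}"
proof -
  have "{w\<in>X. {x,w} \<in> E} = {w\<in>A. {x,w} \<in> E} \<union> {w\<in>B. {x,w} \<in> E}" using assms by auto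
  moreover have "finite A" "finite B" using assms by auto
  ultimately show ?thesis unfolding dg_def using assms(3) by (simp add: card_Un_disjoint disjoint_iff)
qed

lemma clq_dg:
  assumes "clq E U" "u \<in> U" "\<forall>x. {x,x} \<notin> E"
  shows "{w\<in>U. {u,w} \<in> E} = U - {u}"
  using assms unfolding clq_def by auto



lemma str:
  assumes fin: "finite X" and nl: "\<forall>x. {x,x} \<notin> E" and nsX: "ns E X" and c3: "3 \<le> card X"
    and nclq: "\<not> clq E X" and reg: "\<forall>x\<in>X. dg E X x = k" and k3: "3 \<le> k"
    and NP: "\<forall>W. W \<subseteq> X \<and> W \<noteq> X \<and> ns E W \<and> 3 \<le> card W \<longrightarrow> clq E W \<or> ocyc E W"
  shows False
proof -
  have cX: "connected_graph X E" using nsX unfolding ns_def by auto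
  obtain a where a: "a \<in> X" using c3 by fastforce
  obtain a' where a': "a' \<in> X" "a \<noteq> a'" using two_elems[OF fin, of a] c3 by auto
  obtain b where b: "b \<in> X" "{a,b} \<in> E" using nbr_exists[OF cX a a'] by blast
  define PU where "PU = (\<lambda>U. U \<subseteq> X \<and> U \<noteq> X \<and> 2 \<le> card U \<and> ns E U)"
  have "a \<noteq> b" using nl b by auto
  have "card {a,b} = 2" using \<open>a \<noteq> b\<close> by simp
  then have "{a,b} \<noteq> X" using c3 by auto
  then have "PU {a,b}"
    unfolding PU_def using a b ns_edge[OF b(2)] \<open>card {a,b} = 2\<close> by simp
  moreover have "\<forall>U. PU U \<longrightarrow> card U < card X + 1"
  proof (intro allI impI)
    fix U assume "PU U"
    then have "U \<subseteq> X" unfolding PU_def by simp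
    then have "card U \<le> card X" using fin by (rule card_mono[rotated])
    then show "card U < card X + 1" by simp
  qed
  ultimately obtain U where U: "PU U" and Umax: "\<forall>U'. PU U' \<longrightarrow> card U' \<le> card U"
    using ex_has_greatest_nat[of PU "{a,b}" card "card X + 1"] by blast
  have UX: "U \<subseteq> X" "U \<noteq> X" "2 \<le> card U" "ns E U" using U unfolding PU_def by auto
  have fU: "finite U" using UX fin finite_subset by auto
  have cUc: "connected_graph U E" using UX unfolding ns_def by auto
  have hU: "clq E U \<or> ocyc E U"
  proof (cases "3 \<le> card U")
    case True then show ?thesis using NP UX by blast
  next
    case False
    then have "card U = 2" using UX by simp
    then obtain a1 b1 where ab: "U = {a1,b1}" "a1 \<noteq> b1" by (meson card_2_iff)
    have "a1 \<in> U" "b1 \<in> U" using ab by auto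
    then obtain z where z: "z \<in> U" "{a1,z} \<in> E" using nbr_exists[OF cUc _ _ ab(2)] by blast
    have "z = b1" using z ab nl by auto
    then have "{a1,b1} \<in> E" "{b1,a1} \<in> E" using z by (auto simp: ins2)
    then have "clq E U" unfolding clq_def using ab by auto
    then show ?thesis by simp
  qed
  obtain P0 where "P0 \<subseteq> X - U" "connected_graph P0 E" "2 \<le> card (att E U P0)"
    using comp_attach[OF fin nsX UX(1,2,3)] by blast
  define PP where "PP = (\<lambda>P. P \<subseteq> X - U \<and> connected_graph P E \<and> 2 \<le> card (att E U P))"
  have "PP P0" unfolding PP_def using \<open>P0 \<subseteq> X - U\<close> \<open>connected_graph P0 E\<close> \<open>2 \<le> card (att E U P0)\<close> by blast
  then obtain P where P: "PP P" and Pmin: "\<forall>P'. PP P' \<longrightarrow> card P \<le> card P'"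
    using ex_has_least_nat[of PP P0 card] by blast
  have PX: "P \<subseteq> X - U" "connected_graph P E" "2 \<le> card (att E U P)" using P unfolding PP_def by auto
  have fP: "finite P" using PX fin finite_subset by blast
  have minP: "\<forall>P'. P' \<subseteq> P \<and> connected_graph P' E \<and> 2 \<le> card (att E U P') \<longrightarrow> card P \<le> card P'"
    using Pmin PX unfolding PP_def by blast
  have disj: "U \<inter> P = {}" using PX by auto
  have nsUP: "ns E (U \<union> P)" by (rule ear[OF fP fU UX(4) UX(3) disj PX(2) PX(3) minP])
  have Pne: "P \<noteq> {}" using PX unfolding conn_iff by auto
  have cardUP: "card (U \<union> P) = card U + card P" using fU fP disj by (simp add: card_Un_disjoint)
  have "card P > 0" using fP Pne by auto
  have XUP: "X = U \<union> P"
  proof (rule ccontr)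
    assume "X \<noteq> U \<union> P"
    then have "PU (U \<union> P)" unfolding PU_def using UX PX nsUP cardUP by auto
    then have "card (U \<union> P) \<le> card U" using Umax by blast
    then show False using cardUP \<open>card P > 0\<close> by simp
  qed
  have attP: "\<And>p. p \<in> P \<Longrightarrow> att E U {p} = {u\<in>U. {p,u} \<in> E}" unfolding att_def by auto
  show False
  proof (cases "card P = 1")
    case True
    then obtain y where y: "P = {y}" by (meson card_1_singletonE)
    have yU: "y \<notin> U" using disj y by auto
    have two: "2 \<le> card {u\<in>U. {y,u} \<in> E}" using PX y unfolding att_def by simp
    have dgu: "\<And>u. u \<in> U \<Longrightarrow> dg E X u = card {w\<in>U. {u,w} \<in> E} + (if {u,y} \<in> E then 1 else 0)"
    proof -
      fix u assume u: "u \<in> U"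
      have "dg E X u = card {w\<in>U. {u,w} \<in> E} + card {w\<in>{y}. {u,w} \<in> E}"
        using dg_split[OF fin _ disj[unfolded y]] XUP y by simp
      moreover have "card {w\<in>{y}. {u,w} \<in> E} = (if {u,y} \<in> E then 1 else 0)"
      proof (cases "{u,y} \<in> E")
        case True
        then have "{w\<in>{y}. {u,w} \<in> E} = {y}" by auto
        then show ?thesis using True by simp
      next
        case False
        then have "{w\<in>{y}. {u,w} \<in> E} = {}" by auto
        then show ?thesis using False by simp
      qed
      ultimately show "dg E X u = card {w\<in>U. {u,w} \<in> E} + (if {u,y} \<in> E then 1 else 0)" by simp
    qed
    obtain u1 where u1: "u1 \<in> U" "{y,u1} \<in> E" using two by (metis (no_types, lifting) card.empty empty_Collect_eq not_numeral_le_zero)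
    have u1': "{u1,y} \<in> E" using u1 by (simp add: ins2)
    have clqU: "clq E U"
    proof (cases "clq E U")
      case True then show ?thesis .
    next
      case False
      then have oc: "ocyc E U" using hU by simp
      have dU: "\<And>u. u \<in> U \<Longrightarrow> card {w\<in>U. {u,w} \<in> E} = 2" using oc unfolding ocyc_def dg_def by auto
      have ally: "\<forall>u\<in>U. {u,y} \<in> E"
      proof (rule ccontr)
        assume "\<not> ?thesis"
        then obtain u where u: "u \<in> U" "{u,y} \<notin> E" by auto
        have "k = 2" using dgu[OF u(1)] dU[OF u(1)] u reg UX by auto
        then show False using k3 by simp
      qed
      have "k = 3" using dgu[OF u1(1)] dU[OF u1(1)] u1' reg UX u1 by auto
      have "{w\<in>X. {y,w} \<in> E} = U"
        using ally XUP y nl by (auto simp: ins2)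
      then have "card U = 3" using reg y XUP \<open>k = 3\<close> unfolding dg_def by auto
      show ?thesis unfolding clq_def
      proof (intro ballI impI)
        fix x z assume xz: "x \<in> U" "z \<in> U" "x \<noteq> z"
        have "{w\<in>U. {x,w} \<in> E} \<subseteq> U - {x}" using nl by auto
        moreover have "card (U - {x}) = 2" using \<open>card U = 3\<close> xz fU by simp
        ultimately have "{w\<in>U. {x,w} \<in> E} = U - {x}" using dU[OF xz(1)] fU
          by (metis (no_types, lifting) card_subset_eq finite_Diff)
        then show "{x,z} \<in> E" using xz by auto
      qed
    qed
    have ally: "\<forall>u\<in>U. {u,y} \<in> E"
    proof (rule ccontr)
      assume "\<not> ?thesis"
      then obtain u where u: "u \<in> U" "{u,y} \<notin> E" by auto
      have "dg E X u = card U - 1" using dgu[OF u(1)] clq_dg[OF clqU u(1) nl] u fU by simp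
      moreover have "dg E X u1 = card U" using dgu[OF u1(1)] clq_dg[OF clqU u1(1) nl] u1' fU u1 UX
        by (simp add: card_Diff_singleton)
      moreover have "u \<in> X" "u1 \<in> X" using u u1 UX by auto
      then have "dg E X u = k" "dg E X u1 = k" using reg by auto
      ultimately show False using UX by linarith
    qed
    have "clq E X" unfolding clq_def
    proof (intro ballI impI)
      fix x z assume xz: "x \<in> X" "z \<in> X" "x \<noteq> z"
      show "{x,z} \<in> E"
      proof (cases "x = y")
        case True then show ?thesis using xz ally XUP y by (auto simp: ins2)
      next
        case False
        note xy = False
        show ?thesis
        proof (cases "z = y")
          case True then show ?thesis using xz ally XUP y xy by auto
        next
          case False then show ?thesis using xz xy clqU XUP y unfolding clq_def by auto
        qed
      qed
    qed
    then show False using nclq by simp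
  next
    case False
    then have cP2: "2 \<le> card P" using \<open>card P > 0\<close> by simp
    have one: "\<And>p. p \<in> P \<Longrightarrow> card {u\<in>U. {p,u} \<in> E} \<le> 1"
    proof (rule ccontr)
      fix p assume p: "p \<in> P" "\<not> card {u\<in>U. {p,u} \<in> E} \<le> 1"
      have "PP {p}" unfolding PP_def using p PX attP[OF p(1)] conn_single by auto
      then have "card P \<le> 1" using Pmin by fastforce
      then show False using cP2 by simp
    qed
    have pdeg: "\<And>p. p \<in> P \<Longrightarrow> 2 \<le> card {w\<in>P. {p,w} \<in> E}"
    proof -
      fix p assume p: "p \<in> P"
      have "dg E X p = card {w\<in>U. {p,w} \<in> E} + card {w\<in>P. {p,w} \<in> E}"
        by (rule dg_split[OF fin XUP disj])
      then show "2 \<le> card {w\<in>P. {p,w} \<in> E}" using one[OF p] reg p XUP k3 by fastforce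
    qed
    have NC: "\<And>z. z \<in> P \<Longrightarrow> P - {z} \<noteq> {} \<Longrightarrow> connected_graph (P - {z}) E \<Longrightarrow> card (att E U (P - {z})) \<le> 1"
    proof (rule ccontr)
      fix z assume z: "z \<in> P" "P - {z} \<noteq> {}" "connected_graph (P - {z}) E" "\<not> card (att E U (P - {z})) \<le> 1"
      have "PP (P - {z})" unfolding PP_def using z PX by auto
      then have "card P \<le> card (P - {z})" using Pmin by blast
      moreover have "card (P - {z}) < card P" using card_Diff1_less[OF fP z(1)] .
      ultimately show False by simp
    qed
    have fa: "finite (att E U P)" using fU unfolding att_def by simp
    obtain u1 where u1: "u1 \<in> att E U P" using two_elems[OF fa PX(3)] by blast
    obtain u2 where u2: "u2 \<in> att E U P" "u2 \<noteq> u1" using two_elems[OF fa PX(3)] by blast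
    obtain p1 where p1: "p1 \<in> P" "{p1,u1} \<in> E" "u1 \<in> U" using u1 unfolding att_def by auto
    obtain p2 where p2: "p2 \<in> P" "{p2,u2} \<in> E" "u2 \<in> U" using u2 unfolding att_def by auto
    have attge: "\<And>S. p1 \<in> S \<Longrightarrow> p2 \<in> S \<Longrightarrow> S \<subseteq> P \<Longrightarrow> 2 \<le> card (att E U S)"
    proof -
      fix S assume S: "p1 \<in> S" "p2 \<in> S" "S \<subseteq> P"
      have "{u1,u2} \<subseteq> att E U S" using S p1 p2 unfolding att_def by auto
      moreover have "finite (att E U S)" using fU unfolding att_def by simp
      ultimately have "card {u1,u2} \<le> card (att E U S)" by (rule card_mono[rotated])
      then show "2 \<le> card (att E U S)" using u2 by simp
    qed
    have "p1 \<noteq> p2"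
    proof
      assume "p1 = p2"
      then have "{u1,u2} \<subseteq> {u\<in>U. {p1,u} \<in> E}" using p1 p2 by auto
      then have "card {u1,u2} \<le> card {u\<in>U. {p1,u} \<in> E}" using fU by (intro card_mono) auto
      then show False using one[OF p1(1)] u2 by simp
    qed
    have c2: "connected_graph {p2} E" by (rule conn_single)
    have "{p2} \<noteq> P" using cP2 by auto
    then obtain z1 where z1: "z1 \<in> P - {p2}" "connected_graph (P - {z1}) E"
      using far_vertex[OF fP PX(2) _ c2] p2 by blast
    have "z1 = p1"
    proof (rule ccontr)
      assume "z1 \<noteq> p1"
      then have "2 \<le> card (att E U (P - {z1}))" using attge[of "P - {z1}"] p1 p2 z1 by auto
      moreover have "P - {z1} \<noteq> {}" using p2 z1 by auto
      ultimately show False using NC[OF _ _ z1(2)] z1 by fastforce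
    qed
    let ?T = "P - {p1}"
    have cT: "connected_graph ?T E" using z1 \<open>z1 = p1\<close> by simp
    have fT: "finite ?T" using fP by simp
    show False
    proof (cases "?T = {p2}")
      case True
      have "{w\<in>P. {p1,w} \<in> E} \<subseteq> {p2}" using True nl by auto
      then have "card {w\<in>P. {p1,w} \<in> E} \<le> 1" using card_mono[of "{p2}"] by fastforce
      then show False using pdeg[OF p1(1)] by simp
    next
      case False
      have "p2 \<in> ?T" using p2 \<open>p1 \<noteq> p2\<close> by auto
      then obtain z where z: "z \<in> ?T - {p2}" "connected_graph (?T - {z}) E"
        using far_vertex[OF fT cT _ c2] False by blast
      have "\<exists>q\<in>P. {p1,q} \<in> E \<and> q \<noteq> z"
      proof (rule ccontr)
        assume "\<not> ?thesis"
        then have "{w\<in>P. {p1,w} \<in> E} \<subseteq> {z}" by auto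
        then have "card {w\<in>P. {p1,w} \<in> E} \<le> 1" using card_mono[of "{z}"] by fastforce
        then show False using pdeg[OF p1(1)] by simp
      qed
      then obtain q where q: "q \<in> P" "{p1,q} \<in> E" "q \<noteq> z" by blast
      have "q \<noteq> p1" using q nl by auto
      then have qT: "q \<in> ?T - {z}" using q by auto
      have "connected_graph (insert p1 (?T - {z})) E" by (rule conn_add[OF z(2) qT q(2)])
      moreover have "insert p1 (?T - {z}) = P - {z}" using z p1 by auto
      ultimately have cz: "connected_graph (P - {z}) E" by simp
      have "2 \<le> card (att E U (P - {z}))" using attge[of "P - {z}"] p1 p2 z by auto
      moreover have "P - {z} \<noteq> {}" using p1 z by auto
      ultimately show False using NC[OF _ _ cz] z by fastforce
    qed
  qed
qed



locale hole =
  fixes E :: "'a set set" and X :: "'a set" and L :: "'a \<Rightarrow> 'c set" and g :: "'a \<Rightarrow> 'c option"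
  assumes fin: "finite X" and nl: "\<forall>x. {x,x} \<notin> E" and dl: "dla E X L" and pp: "ppc E X L g"
    and nogood: "\<forall>f. \<not> good E X L g f"
begin

definition conf :: "'a \<Rightarrow> ('a \<Rightarrow> 'c) \<Rightarrow> bool" where
  "conf z h \<longleftrightarrow> z \<in> X \<and> good E (X - {z}) L g h"

lemma ext:
  assumes "conf z h" "c \<in> L z" "\<forall>y\<in>X. {z,y} \<in> E \<longrightarrow> h y \<noteq> c"
  shows False
proof -
  have z: "z \<in> X" and gh: "good E (X - {z}) L g h" using assms unfolding conf_def by auto
  have "good E X L g (h(z := c))"
    unfolding good_def
  proof (intro conjI ballI allI impI)
    fix x assume "x \<in> X"
    then show "(h(z := c)) x \<in> L x" using gh assms(2) unfolding good_def by auto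
  next
    fix x y assume xy: "x \<in> X" "y \<in> X" "{x,y} \<in> E"
    have "x \<noteq> y" using xy nl by auto
    show "(h(z := c)) x \<noteq> (h(z := c)) y"
    proof (cases "x = z")
      case True then show ?thesis using assms(3) xy \<open>x \<noteq> y\<close> by auto
    next
      case False
      note xz = False
      show ?thesis
      proof (cases "y = z")
        case True
        then have "{z,x} \<in> E" using xy by (simp add: ins2)
        then show ?thesis using assms(3) xy xz True by fastforce
      next
        case False then show ?thesis using gh xy xz unfolding good_def by auto
      qed
    qed
  next
    fix a
    have "card {x. g x = Some a} \<le> card {x\<in>X - {z}. h x = a}" using gh unfolding good_def by auto
    also have "\<dots> \<le> card {x\<in>X. (h(z := c)) x = a}" using fin by (intro card_mono) auto
    finally show "card {x. g x = Some a} \<le> card {x\<in>X. (h(z := c)) x = a}" .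
  qed
  then show False using nogood by blast
qed

lemma sat:
  assumes "conf z h"
  shows "L z = h ` {y\<in>X. {z,y} \<in> E}" "inj_on h {y\<in>X. {z,y} \<in> E}" "finite (L z)"
    "dg E X z = card (L z)"
proof -
  let ?N = "{y\<in>X. {z,y} \<in> E}"
  have z: "z \<in> X" using assms unfolding conf_def by auto
  have sub: "L z \<subseteq> h ` ?N"
  proof
    fix c assume c: "c \<in> L z"
    show "c \<in> h ` ?N"
    proof (rule ccontr)
      assume "c \<notin> h ` ?N"
      then have "\<forall>y\<in>X. {z,y} \<in> E \<longrightarrow> h y \<noteq> c" by auto
      then show False using ext[OF assms c] by simp
    qed
  qed
  have fN: "finite ?N" using fin by simp
  then show fL: "finite (L z)" using sub finite_subset by blast
  have "dg E X z \<le> card (L z)" using dl z fL unfolding dla_def by auto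
  moreover have "card (L z) \<le> card (h ` ?N)" using sub fN by (intro card_mono) auto
  moreover have "card (h ` ?N) \<le> card ?N" by (rule card_image_le[OF fN])
  moreover have "card ?N = dg E X z" unfolding dg_def by simp
  ultimately have e1: "card (h ` ?N) = card ?N" and e2: "card (L z) = card (h ` ?N)"
    and e3: "dg E X z = card (L z)" by linarith+
  show "inj_on h ?N" using eq_card_imp_inj_on[OF fN e1] .
  show "L z = h ` ?N" using card_subset_eq[OF _ sub e2] fN by blast
  show "dg E X z = card (L z)" using e3 .
qed

lemma mv:
  assumes c: "conf z h" and u: "u \<in> X" "{z,u} \<in> E"
  shows "conf u (h(z := h u))"
proof -
  let ?N = "{y\<in>X. {z,y} \<in> E}"
  have z: "z \<in> X" and gh: "good E (X - {z}) L g h" using c unfolding conf_def by auto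
  have uz: "u \<noteq> z" using u nl by auto
  have uN: "u \<in> ?N" using u by auto
  have hu: "h u \<in> L z" using sat(1)[OF c] uN by auto
  have inj: "inj_on h ?N" using sat(2)[OF c] .
  have "good E (X - {u}) L g (h(z := h u))"
    unfolding good_def
  proof (intro conjI ballI allI impI)
    fix x assume "x \<in> X - {u}"
    then show "(h(z := h u)) x \<in> L x" using gh hu unfolding good_def by auto
  next
    fix x y assume xy: "x \<in> X - {u}" "y \<in> X - {u}" "{x,y} \<in> E"
    have "x \<noteq> y" using xy nl by auto
    show "(h(z := h u)) x \<noteq> (h(z := h u)) y"
    proof (cases "x = z")
      case True
      then have "y \<in> ?N" "y \<noteq> u" using xy by simp_all
      then have "h y \<noteq> h u" using inj_on_contraD[OF inj _ _ uN] by blast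
      then show ?thesis using True \<open>x \<noteq> y\<close> by auto
    next
      case False
      note xz = False
      show ?thesis
      proof (cases "y = z")
        case True
        then have "{z,x} \<in> E" using xy by (simp add: ins2)
        then have "x \<in> ?N" "x \<noteq> u" using xy by simp_all
        then have "h x \<noteq> h u" using inj_on_contraD[OF inj _ _ uN] by blast
        then show ?thesis using True xz by auto
      next
        case False then show ?thesis using gh xy xz unfolding good_def by auto
      qed
    qed
  next
    fix a
    have "card {x. g x = Some a} \<le> card {x\<in>X - {z}. h x = a}" using gh unfolding good_def by auto
    also have "\<dots> = card {x\<in>X - {u}. (h(z := h u)) x = a}"
    proof (cases "h u = a")
      case True
      let ?S = "{x\<in>X - {z}. h x = a}"
      have eq: "{x\<in>X - {u}. (h(z := h u)) x = a} = insert z (?S - {u})"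
        using True z uz by auto
      have uS: "u \<in> ?S" using True u uz by auto
      have fS: "finite ?S" using fin by simp
      have "z \<notin> ?S - {u}" by simp
      then have "card (insert z (?S - {u})) = Suc (card (?S - {u}))" using fS by simp
      also have "\<dots> = card ?S" using fS uS card_Diff1_less[OF fS uS] by (simp add: card_Diff_singleton)
      finally show ?thesis using eq by simp
    next
      case False
      have "{x\<in>X - {u}. (h(z := h u)) x = a} = {x\<in>X - {z}. h x = a}"
        using False by auto
      then show ?thesis by simp
    qed
    finally show "card {x. g x = Some a} \<le> card {x\<in>X - {u}. (h(z := h u)) x = a}" .
  qed
  then show ?thesis using u unfolding conf_def by simp
qed

lemma walk:
  assumes "conf z h" "(z,y) \<in> (adjR E T)\<^sup>*" "T \<subseteq> X"
  shows "\<exists>h'. conf y h' \<and> (\<forall>x. x \<notin> T \<longrightarrow> h' x = h x)"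
  using assms(2)
proof (induction rule: rtrancl_induct)
  case base
  then show ?case using assms(1) by blast
next
  case (step y y')
  then obtain h1 where h1: "conf y h1" "\<forall>x. x \<notin> T \<longrightarrow> h1 x = h x" by blast
  have "y \<in> T" "y' \<in> X" "{y,y'} \<in> E" using step(2) assms(3) unfolding adjR_def by auto
  then have "conf y' (h1(y := h1 y'))" using mv[OF h1(1)] by simp
  moreover have "\<forall>x. x \<notin> T \<longrightarrow> (h1(y := h1 y')) x = h x" using h1(2) \<open>y \<in> T\<close> by auto
  ultimately show ?case by blast
qed

lemma everywhere:
  assumes "connected_graph X E" "conf z h" "y \<in> X"
  shows "\<exists>h'. conf y h'"
proof -
  have "z \<in> X" using assms unfolding conf_def by auto
  then have "(z,y) \<in> (adjR E X)\<^sup>*" using assms unfolding conn_iff by auto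
  then show ?thesis using walk[OF assms(2) _ order_refl] by blast
qed

lemma lsub:
  assumes nsX: "ns E X" and c0: "conf z0 h0" and v: "v \<in> X" and w: "w \<in> X" and e: "{v,w} \<in> E"
  shows "L v \<subseteq> L w"
proof
  fix c assume c: "c \<in> L v"
  have cX: "connected_graph X E" using nsX unfolding ns_def by auto
  obtain h where h: "conf v h" using everywhere[OF cX c0 v] by blast
  then obtain u where u: "u \<in> X" "{v,u} \<in> E" "h u = c" using sat(1)[OF h] c by auto
  show "c \<in> L w"
  proof (cases "u = w")
    case True
    have "w \<noteq> v" using e nl by auto
    then have "h w \<in> L w" using h w unfolding conf_def good_def by auto
    then show ?thesis using True u by simp
  next
    case False
    have h1: "conf u (h(v := c))" using mv[OF h u(1,2)] u(3) by simp
    have uv: "u \<noteq> v" using u nl by auto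
    have "X - {v} \<noteq> {}" using u uv by auto
    then have cXv: "connected_graph (X - {v}) E" using nsX v unfolding ns_def by auto
    have wv: "w \<noteq> v" using e nl by auto
    have "(u,w) \<in> (adjR E (X - {v}))\<^sup>*" using cXv u w uv wv unfolding conn_iff by auto
    then obtain h2 where h2: "conf w h2" "\<forall>x. x \<notin> X - {v} \<longrightarrow> h2 x = (h(v := c)) x"
      using walk[OF h1, of w "X - {v}"] by blast
    have "h2 v = c" using h2(2) by auto
    have "{w,v} \<in> E" using e by (simp add: ins2)
    then have "v \<in> {y\<in>X. {w,y} \<in> E}" using v by auto
    then have "h2 v \<in> L w" using sat(1)[OF h2(1)] by auto
    then show ?thesis using \<open>h2 v = c\<close> by simp
  qed
qed

end



context hole
begin

lemma parity:
  assumes c: "conf z h" and S: "\<forall>x\<in>X. L x = S" and k2: "\<forall>x\<in>X. dg E X x = 2"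
  shows "odd (card X)"
proof -
  let ?N = "{y\<in>X. {z,y} \<in> E}"
  have z: "z \<in> X" and gh: "good E (X - {z}) L g h" using c unfolding conf_def by auto
  have "card ?N = 2" using k2 z unfolding dg_def by auto
  then obtain a b where ab: "?N = {a,b}" "a \<noteq> b" by (meson card_2_iff)
  have aN: "a \<in> ?N" and bN: "b \<in> ?N" using ab by auto
  have hab: "h a \<noteq> h b" using inj_on_contraD[OF sat(2)[OF c] ab(2) aN bN] .
  have LS: "L z = {h a, h b}" using sat(1)[OF c] ab by auto
  let ?Y = "X - {z}"
  have az: "a \<noteq> z" "b \<noteq> z" using aN bN nl by auto
  have hY: "\<And>x. x \<in> ?Y \<Longrightarrow> h x = h a \<or> h x = h b"
  proof -
    fix x assume x: "x \<in> ?Y"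
    then have "h x \<in> L x" using gh unfolding good_def by auto
    then show "h x = h a \<or> h x = h b" using S x z LS by auto
  qed
  have prp: "\<And>x y. x \<in> ?Y \<Longrightarrow> y \<in> ?Y \<Longrightarrow> {x,y} \<in> E \<Longrightarrow> h x \<noteq> h y"
    using gh unfolding good_def by auto
  define A where "A = {x\<in>?Y. h x = h a}"
  define B where "B = {x\<in>?Y. h x = h b}"
  have YAB: "?Y = A \<union> B" using hY unfolding A_def B_def by auto
  have AB: "A \<inter> B = {}" using hab unfolding A_def B_def by auto
  have fA: "finite A" "finite B" using fin unfolding A_def B_def by auto
  have aA: "a \<in> A" "b \<in> B" "b \<notin> A" "a \<notin> B" using aN bN az hab unfolding A_def B_def by auto
  have dY: "\<And>x. x \<in> ?Y \<Longrightarrow> card {y\<in>?Y. {x,y} \<in> E} + (if x = a \<or> x = b then 1 else 0) = 2"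
  proof -
    fix x assume x: "x \<in> ?Y"
    have "dg E (X - {z}) x = (if {x,z} \<in> E \<and> z \<in> X then dg E X x - 1 else dg E X x)"
      using dg_del[OF fin, of x z E] x by auto
    moreover have "({x,z} \<in> E) = (x = a \<or> x = b)"
    proof -
      have "({x,z} \<in> E) = (x \<in> ?N)" using x by (auto simp: ins2)
      then show ?thesis using ab by auto
    qed
    ultimately show "card {y\<in>?Y. {x,y} \<in> E} + (if x = a \<or> x = b then 1 else 0) = 2"
      using k2 x z unfolding dg_def by auto
  qed
  have nA: "\<And>x. x \<in> A \<Longrightarrow> {y\<in>?Y. {x,y} \<in> E} = {y\<in>B. {x,y} \<in> E}"
  proof -
    fix x assume x: "x \<in> A"
    show "{y\<in>?Y. {x,y} \<in> E} = {y\<in>B. {x,y} \<in> E}"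
    proof
      show "{y\<in>?Y. {x,y} \<in> E} \<subseteq> {y\<in>B. {x,y} \<in> E}"
      proof
        fix y assume y: "y \<in> {y\<in>?Y. {x,y} \<in> E}"
        have "x \<in> ?Y" using x unfolding A_def by auto
        then have "h x \<noteq> h y" using prp y by auto
        moreover have "y \<in> ?Y" using y by simp
        ultimately have "h y = h b" using hY[of y] x unfolding A_def by auto
        then show "y \<in> {y\<in>B. {x,y} \<in> E}" using y unfolding B_def by auto
      qed
      show "{y\<in>B. {x,y} \<in> E} \<subseteq> {y\<in>?Y. {x,y} \<in> E}" unfolding B_def by auto
    qed
  qed
  have nB: "\<And>x. x \<in> B \<Longrightarrow> {y\<in>?Y. {x,y} \<in> E} = {y\<in>A. {x,y} \<in> E}"
  proof -
    fix x assume x: "x \<in> B"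
    show "{y\<in>?Y. {x,y} \<in> E} = {y\<in>A. {x,y} \<in> E}"
    proof
      show "{y\<in>?Y. {x,y} \<in> E} \<subseteq> {y\<in>A. {x,y} \<in> E}"
      proof
        fix y assume y: "y \<in> {y\<in>?Y. {x,y} \<in> E}"
        have "x \<in> ?Y" using x unfolding B_def by auto
        then have "h x \<noteq> h y" using prp y by auto
        moreover have "y \<in> ?Y" using y by simp
        ultimately have "h y = h a" using hY[of y] x unfolding B_def by auto
        then show "y \<in> {y\<in>A. {x,y} \<in> E}" using y unfolding A_def by auto
      qed
      show "{y\<in>A. {x,y} \<in> E} \<subseteq> {y\<in>?Y. {x,y} \<in> E}" unfolding A_def by auto
    qed
  qed
  have sA: "(\<Sum>x\<in>A. card {y\<in>B. {x,y} \<in> E}) = card (SIGMA x:A. {y\<in>B. {x,y} \<in> E})"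
    using fA by (simp add: card_SigmaI)
  have sB: "(\<Sum>x\<in>B. card {y\<in>A. {x,y} \<in> E}) = card (SIGMA x:B. {y\<in>A. {x,y} \<in> E})"
    using fA by (simp add: card_SigmaI)
  have sw: "(SIGMA x:B. {y\<in>A. {x,y} \<in> E}) = prod.swap ` (SIGMA x:A. {y\<in>B. {x,y} \<in> E})"
    by (auto simp: ins2 image_iff)
  have "card (SIGMA x:B. {y\<in>A. {x,y} \<in> E}) = card (SIGMA x:A. {y\<in>B. {x,y} \<in> E})"
    unfolding sw by (rule card_image) (simp add: swap_inj_on)
  then have eqs: "(\<Sum>x\<in>A. card {y\<in>B. {x,y} \<in> E}) = (\<Sum>x\<in>B. card {y\<in>A. {x,y} \<in> E})"
    using sA sB by simp
  have "(\<Sum>x\<in>A. card {y\<in>B. {x,y} \<in> E}) + (\<Sum>x\<in>A. (if x = a then 1 else 0)) = (\<Sum>x\<in>A. 2::nat)"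
  proof -
    have "(\<Sum>x\<in>A. card {y\<in>B. {x,y} \<in> E}) + (\<Sum>x\<in>A. (if x = a then 1 else 0))
        = (\<Sum>x\<in>A. card {y\<in>B. {x,y} \<in> E} + (if x = a then 1 else 0))" by (simp add: sum.distrib)
    also have "\<dots> = (\<Sum>x\<in>A. 2::nat)"
    proof (rule sum.cong[OF refl])
      fix x assume x: "x \<in> A"
      have "x \<in> ?Y" using x unfolding A_def by auto
      moreover have "x \<noteq> b" using x aA by auto
      ultimately show "card {y\<in>B. {x,y} \<in> E} + (if x = a then 1 else 0) = 2"
        using dY[of x] nA[OF x] by auto
    qed
    finally show ?thesis .
  qed
  then have eA: "(\<Sum>x\<in>A. card {y\<in>B. {x,y} \<in> E}) + 1 = 2 * card A" using fA aA by simp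
  have "(\<Sum>x\<in>B. card {y\<in>A. {x,y} \<in> E}) + (\<Sum>x\<in>B. (if x = b then 1 else 0)) = (\<Sum>x\<in>B. 2::nat)"
  proof -
    have "(\<Sum>x\<in>B. card {y\<in>A. {x,y} \<in> E}) + (\<Sum>x\<in>B. (if x = b then 1 else 0))
        = (\<Sum>x\<in>B. card {y\<in>A. {x,y} \<in> E} + (if x = b then 1 else 0))" by (simp add: sum.distrib)
    also have "\<dots> = (\<Sum>x\<in>B. 2::nat)"
    proof (rule sum.cong[OF refl])
      fix x assume x: "x \<in> B"
      have "x \<in> ?Y" using x unfolding B_def by auto
      moreover have "x \<noteq> a" using x aA by auto
      ultimately show "card {y\<in>A. {x,y} \<in> E} + (if x = b then 1 else 0) = 2"
        using dY[of x] nB[OF x] by auto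
    qed
    finally show ?thesis .
  qed
  then have eB: "(\<Sum>x\<in>B. card {y\<in>A. {x,y} \<in> E}) + 1 = 2 * card B" using fA aA by simp
  have "card A = card B" using eA eB eqs by simp
  moreover have "card ?Y = card A + card B"
  proof -
    have "card (A \<union> B) = card A + card B" by (rule card_Un_disjoint[OF fA AB])
    then show ?thesis using YAB by simp
  qed
  moreover have "card X = card ?Y + 1" using card_Suc_Diff1[OF fin z] by simp
  ultimately show "odd (card X)" by simp
qed

end



lemma dg_ge2:
  assumes fin: "finite X" and nl: "\<forall>x. {x,x} \<notin> E" and nsX: "ns E X" and c3: "3 \<le> card X" and v: "v \<in> X"
  shows "2 \<le> dg E X v"
proof -
  have cX: "connected_graph X E" using nsX unfolding ns_def by auto
  obtain v' where v': "v' \<in> X" "v \<noteq> v'" using two_elems[OF fin, of v] c3 by auto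
  obtain u where u: "u \<in> X" "{v,u} \<in> E" using nbr_exists[OF cX v v'] by blast
  have uv: "u \<noteq> v" using u nl by auto
  have "card (X - {u}) \<ge> 2" using c3 u fin by simp
  then obtain w' where w': "w' \<in> X - {u}" "v \<noteq> w'" using two_elems[of "X - {u}" v] fin by auto
  have "X - {u} \<noteq> {}" using w' by auto
  then have cXu: "connected_graph (X - {u}) E" using nsX u unfolding ns_def by auto
  have "v \<in> X - {u}" using v uv by auto
  then obtain w where w: "w \<in> X - {u}" "{v,w} \<in> E" using nbr_exists[OF cXu _ w'(1) w'(2)] by blast
  have "{u,w} \<subseteq> {y\<in>X. {v,y} \<in> E}" using u w by auto
  then have "card {u,w} \<le> dg E X v" unfolding dg_def using fin by (intro card_mono) auto
  moreover have "card {u,w} = 2" using w by auto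
  ultimately show ?thesis by simp
qed

lemma core:
  assumes fin: "finite X" and nl: "\<forall>x. {x,x} \<notin> E" and nsX: "ns E X" and c3: "3 \<le> card X"
    and nclq: "\<not> clq E X" and nocyc: "\<not> ocyc E X"
    and NP: "\<forall>W. W \<subseteq> X \<and> W \<noteq> X \<and> ns E W \<and> 3 \<le> card W \<longrightarrow> clq E W \<or> ocyc E W"
    and dl: "dla E X L" and pp: "ppc E X L g"
  shows "\<exists>f. good E X L g f"
proof (rule ccontr)
  assume "\<not> ?thesis"
  then have ng: "\<forall>f. \<not> good E X L g f" by blast
  interpret H: hole E X L g using fin nl dl pp ng by unfold_locales
  have cX: "connected_graph X E" using nsX unfolding ns_def by auto
  have domg: "dom g \<subseteq> X" and gl: "\<And>x c. g x = Some c \<Longrightarrow> c \<in> L x"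
    and gp: "\<And>x y. {x,y} \<in> E \<Longrightarrow> x \<in> dom g \<Longrightarrow> y \<in> dom g \<Longrightarrow> g x \<noteq> g y"
    using pp unfolding ppc_def by auto
  obtain z where z: "z \<in> X" "g z = None"
  proof (rule ccontr)
    assume "\<not> thesis"
    then have all: "\<forall>x\<in>X. g x \<noteq> None" using that by blast
    have "good E X L g (\<lambda>x. the (g x))"
      unfolding good_def
    proof (intro conjI ballI allI impI)
      fix x assume "x \<in> X"
      then show "the (g x) \<in> L x" using all gl by fastforce
    next
      fix x y assume xy: "x \<in> X" "y \<in> X" "{x,y} \<in> E"
      then have "x \<in> dom g" "y \<in> dom g" using all by auto
      then show "the (g x) \<noteq> the (g y)" using gp[OF xy(3)] by auto
    next
      fix a
      have "{x. g x = Some a} \<subseteq> {x\<in>X. the (g x) = a}" using domg by auto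
      then show "card {x. g x = Some a} \<le> card {x\<in>X. the (g x) = a}" using fin by (intro card_mono) auto
    qed
    then show False using ng by blast
  qed
  obtain z' where z': "z' \<in> X" "z \<noteq> z'" using two_elems[OF fin, of z] c3 by auto
  obtain r where r: "r \<in> X" "{z,r} \<in> E" using nbr_exists[OF cX z(1) z'] by blast
  have rz: "r \<noteq> z" using r nl by auto
  have "X - {z} \<noteq> {}" using r rz by auto
  then have cXz: "connected_graph (X - {z}) E" using nsX z unfolding ns_def by auto
  have fXz: "finite (X - {z})" using fin by simp
  have dl': "dla E (X - {z}) L"
    unfolding dla_def
  proof
    fix x assume x: "x \<in> X - {z}"
    have "dg E (X - {z}) x \<le> dg E X x" unfolding dg_def using fin by (intro card_mono) auto
    then show "infinite (L x) \<or> dg E (X - {z}) x \<le> card (L x)" using dl x unfolding dla_def by auto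
  qed
  have pp': "ppc E (X - {z}) L g" using pp z unfolding ppc_def by auto
  have rz': "r \<in> X - {z}" using r rz by auto
  have sl: "infinite (L r) \<or> dg E (X - {z}) r < card (L r)"
  proof -
    have "{r,z} \<in> E" using r by (simp add: ins2)
    then have d: "dg E (X - {z}) r = dg E X r - 1" using dg_del[OF fin rz, of E] z by auto
    have "dg E X r \<ge> 1" using nbr_dg[OF fin cX r(1) z(1) rz] .
    then show ?thesis using d dl r unfolding dla_def by fastforce
  qed
  obtain h where "good E (X - {z}) L g h" using slack[OF fXz nl cXz rz' sl dl' pp'] by blast
  then have c0: "H.conf z h" unfolding H.conf_def using z by simp
  have lr: "\<And>v. (z,v) \<in> (adjR E X)\<^sup>* \<Longrightarrow> L v = L z"
  proof -
    fix v assume "(z,v) \<in> (adjR E X)\<^sup>*"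
    then show "L v = L z"
    proof (induction rule: rtrancl_induct)
      case base then show ?case by simp
    next
      case (step v v')
      have e: "v \<in> X" "v' \<in> X" "{v,v'} \<in> E" using step(2) unfolding adjR_def by auto
      have "{v',v} \<in> E" using e by (simp add: ins2)
      then have "L v \<subseteq> L v'" "L v' \<subseteq> L v" using H.lsub[OF nsX c0] e by auto
      then show ?case using step(3) by simp
    qed
  qed
  have LS: "\<forall>v\<in>X. L v = L z"
  proof
    fix v assume v: "v \<in> X"
    have "(z,v) \<in> (adjR E X)\<^sup>*" using cX z(1) v unfolding conn_iff by blast
    then show "L v = L z" by (rule lr)
  qed
  have reg: "\<forall>v\<in>X. dg E X v = card (L z)"
  proof
    fix v assume v: "v \<in> X"
    obtain h' where "H.conf v h'" using H.everywhere[OF cX c0 v] by blast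
    then show "dg E X v = card (L z)" using H.sat(4) LS v by auto
  qed
  have k2: "2 \<le> card (L z)" using dg_ge2[OF fin nl nsX c3 z(1)] reg z by simp
  show False
  proof (cases "card (L z) = 2")
    case True
    have "odd (card X)" using H.parity[OF c0 LS] reg True by simp
    then have "ocyc E X" unfolding ocyc_def using cX c3 reg True by simp
    then show False using nocyc by simp
  next
    case False
    then have "3 \<le> card (L z)" using k2 by simp
    then show False using str[OF fin nl nsX c3 nclq reg _ NP] by simp
  qed
qed

definition bad :: "'a set set \<Rightarrow> 'a set \<Rightarrow> 'a set \<Rightarrow> bool" where
  "bad E X W \<longleftrightarrow> W \<subseteq> X \<and> ns E W \<and> 3 \<le> card W \<and> \<not> clq E W \<and> \<not> ocyc E W"

lemma main:
  assumes "finite X" "\<forall>x. {x,x} \<notin> E" "connected_graph X E" "bad E X W" "dla E X L" "ppc E X L g"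
  shows "\<exists>f. good E X L g f"
  using assms
proof (induction "card X" arbitrary: X L g W rule: less_induct)
  case less
  note fin = less.prems(1) and nl = less.prems(2) and cX = less.prems(3) and bW = less.prems(4)
    and dl = less.prems(5) and pp = less.prems(6)
  show ?case
  proof (cases "\<exists>W'. bad E X W' \<and> W' \<noteq> X")
    case True
    then obtain W' where W': "bad E X W'" "W' \<noteq> X" by blast
    have W'X: "W' \<subseteq> X" "ns E W'" "3 \<le> card W'" using W' unfolding bad_def by auto
    have cW: "connected_graph W' E" using W'X unfolding ns_def by auto
    obtain z where z: "z \<in> X - W'" "connected_graph (X - {z}) E"
      using far_vertex[OF fin cX W'X(1) cW W'(2)] by blast
    obtain w where w: "w \<in> W'" using W'X by fastforce
    have zX: "z \<in> X" "z \<noteq> w" using z w by auto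
    have d1: "dg E X z \<ge> 1" using nbr_dg[OF fin cX zX(1) _ zX(2)] w W'X by auto
    obtain c where ch: "g z = Some c \<or> (g z = None \<and> c \<in> L z \<and> card {y. {z,y} \<in> E \<and> g y = Some c} \<le> 1)"
      using legal[OF fin zX(1) pp dl d1] by blast
    note mv = move[OF fin zX(1) nl pp dl ch]
    have bad': "bad E (X - {z}) W'" using W' z unfolding bad_def by auto
    have "card (X - {z}) < card X" by (rule card_Diff1_less[OF fin zX(1)])
    moreover have "finite (X - {z})" using fin by simp
    ultimately obtain f where "good E (X - {z}) (Lm E z c L) (gm E z c g) f"
      using less.hyps[OF _ _ nl z(2) bad' mv(1) mv(2)] by presburger
    then have "good E X L g (f(z := c))" by (rule mv(3))
    then show ?thesis by blast
  next
    case False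
    then have WX: "W = X" using bW by blast
    have bX: "ns E X" "3 \<le> card X" "\<not> clq E X" "\<not> ocyc E X" using bW WX unfolding bad_def by auto
    have NP: "\<forall>W. W \<subseteq> X \<and> W \<noteq> X \<and> ns E W \<and> 3 \<le> card W \<longrightarrow> clq E W \<or> ocyc E W"
      using False unfolding bad_def by blast
    show ?thesis by (rule core[OF fin nl bX NP dl pp])
  qed
qed



lemma conn_cong:
  assumes "\<forall>u\<in>Y. \<forall>v\<in>Y. ({u,v} \<in> F1) = ({u,v} \<in> F2)"
  shows "connected_graph Y F1 = connected_graph Y F2"
proof -
  have "{(u, v). u \<in> Y \<and> v \<in> Y \<and> {u, v} \<in> F1} = {(u, v). u \<in> Y \<and> v \<in> Y \<and> {u, v} \<in> F2}"
    using assms by auto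
  then show ?thesis unfolding connected_graph_def by simp
qed

lemma conn_mono_edges:
  assumes "connected_graph Y F1" "F1 \<subseteq> F2"
  shows "connected_graph Y F2"
proof -
  have "{(u, v). u \<in> Y \<and> v \<in> Y \<and> {u, v} \<in> F1} \<subseteq> {(u, v). u \<in> Y \<and> v \<in> Y \<and> {u, v} \<in> F2}"
    using assms(2) by auto
  then have "({(u, v). u \<in> Y \<and> v \<in> Y \<and> {u, v} \<in> F1})\<^sup>* \<subseteq> ({(u, v). u \<in> Y \<and> v \<in> Y \<and> {u, v} \<in> F2})\<^sup>*"
    by (rule rtrancl_mono)
  then show ?thesis using assms(1) unfolding connected_graph_def by blast
qed

lemma block_bad:
  assumes gr: "graph V E" and bl: "block V E W F" and nc: "\<not> is_clique W F" and no: "\<not> is_odd_cycle W F"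
  shows "bad E V W"
proof -
  have sg: "W \<subseteq> V" "F \<subseteq> E" "\<forall>e\<in>F. e \<subseteq> W" and nsF: "nonseparable W F"
    using bl unfolding block_def subgraph_def by auto
  have mx: "\<forall>W' F'. subgraph W' F' V E \<and> nonseparable W' F' \<and> W \<subseteq> W' \<and> F \<subseteq> F' \<longrightarrow> W' = W \<and> F' = F"
    using bl unfolding block_def by blast
  define F' where "F' = {e\<in>E. e \<subseteq> W}"
  have FF': "F \<subseteq> F'" using sg unfolding F'_def by auto
  have "nonseparable W F'"
    unfolding nonseparable_def
  proof (intro conjI allI)
    show "connected_graph W F'" using nsF FF' conn_mono_edges unfolding nonseparable_def by blast
    fix x
    show "\<not> cut_vertex W F' x"
    proof
      assume cv: "cut_vertex W F' x"
      have "\<not> cut_vertex W F x" using nsF unfolding nonseparable_def by auto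
      then have "connected_graph (W - {x}) (del_vertex_edges F x)" using cv unfolding cut_vertex_def by auto
      moreover have "del_vertex_edges F x \<subseteq> del_vertex_edges F' x" using FF' unfolding del_vertex_edges_def by auto
      ultimately have "connected_graph (W - {x}) (del_vertex_edges F' x)" using conn_mono_edges by blast
      then show False using cv unfolding cut_vertex_def by auto
    qed
  qed
  moreover have "subgraph W F' V E" unfolding subgraph_def F'_def using sg by auto
  ultimately have "F' = F" using mx FF' by blast
  then have FE: "\<And>u v. u \<in> W \<Longrightarrow> v \<in> W \<Longrightarrow> ({u,v} \<in> F) = ({u,v} \<in> E)" unfolding F'_def by auto
  have cW: "\<And>Y. Y \<subseteq> W \<Longrightarrow> connected_graph Y F = connected_graph Y E"
    using FE by (intro conn_cong) blast
  have nsW: "ns E W"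
    unfolding ns_def
  proof (intro conjI ballI impI)
    show "connected_graph W E" using nsF cW[of W] unfolding nonseparable_def by auto
    fix x assume x: "x \<in> W" "W - {x} \<noteq> {}"
    have "\<not> cut_vertex W F x" using nsF unfolding nonseparable_def by auto
    then have "connected_graph (W - {x}) (del_vertex_edges F x)" using x unfolding cut_vertex_def by auto
    moreover have "\<forall>u\<in>W - {x}. \<forall>v\<in>W - {x}. ({u,v} \<in> del_vertex_edges F x) = ({u,v} \<in> E)"
      using FE unfolding del_vertex_edges_def by auto
    ultimately show "connected_graph (W - {x}) E" using conn_cong by blast
  qed
  have nclq: "\<not> clq E W" using nc FE unfolding clq_def is_clique_def by auto
  have dgeq: "\<And>x. x \<in> W \<Longrightarrow> degree W F x = dg E W x"
  proof -
    fix x assume x: "x \<in> W"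
    have "{y \<in> W. {x, y} \<in> F} = {y \<in> W. {x, y} \<in> E}" using FE x by auto
    then show "degree W F x = dg E W x" unfolding degree_def dg_def by simp
  qed
  have nocyc: "\<not> ocyc E W"
  proof
    assume "ocyc E W"
    then have "is_odd_cycle W F" unfolding ocyc_def is_odd_cycle_def using cW[of W] dgeq by auto
    then show False using no by simp
  qed
  have finW: "finite W" using gr sg finite_subset unfolding graph_def by auto
  have c3: "3 \<le> card W"
  proof (rule ccontr)
    assume "\<not> 3 \<le> card W"
    then have cl: "card W \<le> 2" by simp
    have cWE: "connected_graph W E" using nsW unfolding ns_def by auto
    have "clq E W"
      unfolding clq_def
    proof (intro ballI impI)
      fix x y assume xy: "x \<in> W" "y \<in> W" "x \<noteq> y"
      have "W = {x,y}"
      proof (rule ccontr)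
        assume "W \<noteq> {x,y}"
        then obtain w where "w \<in> W" "w \<notin> {x,y}" using xy by auto
        then have "{x,y,w} \<subseteq> W" using xy by auto
        then have "card {x,y,w} \<le> card W" using finW by (rule card_mono[rotated])
        then show False using cl xy \<open>w \<notin> {x,y}\<close> by auto
      qed
      obtain z where z: "z \<in> W" "{x,z} \<in> E" using nbr_exists[OF cWE xy] by blast
      have "z \<noteq> x"
      proof
        assume "z = x"
        then have "card {x,x} = 2" using z gr unfolding graph_def by blast
        then show False by simp
      qed
      then have "z = y" using z \<open>W = {x,y}\<close> by auto
      then show "{x,y} \<in> E" using z by simp
    qed
    then show False using nclq by simp
  qed
  show ?thesis unfolding bad_def using sg nsW c3 nclq nocyc by auto
qed

theorem theorem1p14:
  fixes V :: "'a set" and E :: "'a set set" and L :: "'a \<Rightarrow> 'c set"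
    and g :: "'a \<Rightarrow> 'c option"
  assumes "graph V E"
    and "connected_graph V E"
    and "\<not> gallai_tree V E"
    and "degree_list_assignment V E L"
    and "proper_partial_L_coloring V E L g"
  shows "\<exists>f. proper_L_coloring V E L f \<and>
     (\<forall>\<alpha> \<in> (\<Union>x\<in>V. L x). card {x \<in> V. f x = \<alpha>} \<ge> card {x. g x = Some \<alpha>})"
proof -
  have fin: "finite V" using assms(1) unfolding graph_def by auto
  have nl: "\<forall>x. {x,x} \<notin> E"
  proof (intro allI notI)
    fix x assume "{x,x} \<in> E"
    then have "card {x,x} = 2" using assms(1) unfolding graph_def by blast
    then show False by simp
  qed
  obtain W F where bl: "block V E W F" "\<not> is_clique W F" "\<not> is_odd_cycle W F"
    using assms(2,3) unfolding gallai_tree_def by blast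
  have bW: "bad E V W" by (rule block_bad[OF assms(1) bl])
  have dl: "dla E V L" using assms(4) unfolding degree_list_assignment_def dla_def degree_def dg_def .
  have pp: "ppc E V L g" using assms(5) unfolding proper_partial_L_coloring_def ppc_def .
  obtain f where f: "good E V L g f" using main[OF fin nl assms(2) bW dl pp] by blast
  have "proper_L_coloring V E L f" using f unfolding good_def proper_L_coloring_def by blast
  moreover have "\<forall>\<alpha> \<in> (\<Union>x\<in>V. L x). card {x \<in> V. f x = \<alpha>} \<ge> card {x. g x = Some \<alpha>}"
    using f unfolding good_def by blast
  ultimately show ?thesis by blast
qed


end
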